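(* Let $K$ be an algebraically closed field complete with respect to a non-archimedean absolute value $|\cdot|$, with valuation ring $\mathcal{O}$, maximal ideal $\mathfrak{m}$, residue field $k$. Let $\lambda_1,\lambda_2\in K$ with $\lambda_1\lambda_2\ne1$, and let $\varphi(z)=\dfrac{z^2+\lambda_1z}{\lambda_2z+1}$, assumed to have three distinct fixed points $0,\infty,\alpha_3=(\lambda_1-1)/(\lambda_2-1)$, with multipliers $\lambda_1,\lambda_2,\lambda_3$ respectively. Let $\xi$ be the unique point of $\mathbb{P}^1_{\mathrm{Berk}}$ with $w_\varphi(\xi)=1$. (A) If $\varphi$ has no repelling classical fixed points, then $\xi$ satisfies (W1). Moreover: (i) if $\widetilde{\lambda_1\lambda_2}\ne\tilde1$, then $\xi=\zeta_G$; (ii) if $\tilde\lambda_1=\tilde\lambda_2=\tilde\lambda_3=\tilde1$, then $\xi=\zeta_{D(-1,\sqrt{|\lambda_1\lambda_2-1|})}$. (B) If $|\lambda_1|>1\ge|\lambda_2|$, then $\xi=\zeta_{D(0,|\lambda_1|)}$; moreover (i) if $\tilde\lambda_2\notin\{\tilde0,\tilde1\}$, $\xi$ satisfies (W2); (ii) if $\tilde\lambda_2=\tilde1$, $\xi$ satisfies (W3); (iii) if $\tilde\lambda_2=\tilde0$, $\xi$ satisfies (W4).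
   Context: A classical fixed point with multiplier $\lambda$ is repelling if $|\lambda|>1$. $\mathbb{P}^1_{\mathrm{Berk}}$ is the Berkovich projective line over $K$; $\zeta_{D(a,r)}$ is the point corresponding to $D(a,r)=\{x:|x-a|\le r\}$, $\zeta_G=\zeta_{D(0,1)}$. For a type II point $P=\gamma(\zeta_G)$, $\gamma\in\mathrm{PGL}_2(K)$, the reduction $\tilde\varphi_P$ is the reduction mod $\mathfrak{m}$ of a normalized lift (coefficients in $\mathcal{O}$, one a unit) of $\gamma^{-1}\circ\varphi\circ\gamma$, after cancelling common factors; $P$ is fixed iff $\tilde\varphi_P$ is nonconstant. $\Gamma_{\mathrm{Fix}}$ is the tree spanned by the classical fixed points; $\Gamma_{\mathrm{Fix,Repel}}$ the tree spanned by classical fixed points and type II fixed points with $\deg\tilde\varphi_P\ge2$, $v(P)$ the valence there. Weight $w_\varphi(P)$: for type II fixed $P$, $\deg\tilde\varphi_P-1+N(P)$, $N(P)$ the number of tangent directions at $P$ containing classical fixed points that are moved by $\varphi_*$; for a branch point of $\Gamma_{\mathrm{Fix}}$ moved by $\varphi$, $v(P)-2$; else $0$. For degree 2 exactly one point has positive weight, equal to 1. (W1): $P$ fixed with $\deg\tilde\varphi_P\ge2$. (W2): $P$ fixed, $\tilde\varphi_P$ conjugate over $k$ to $\tilde cz$ with $\tilde c\in k^\times\setminus\{\tilde1\}$, and $P$ a branch point of $\Gamma_{\mathrm{Fix}}$. (W3): $P$ fixed, $\tilde\varphi_P$ conjugate to $z+\tilde a$, $\tilde a\in k^\times$, and $P\in\Gamma_{\mathrm{Fix}}$.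 (W4): $P$ a branch point of $\Gamma_{\mathrm{Fix}}$ moved by $\varphi$. *)

theory Defs
  imports "HOL-Computational_Algebra.Polynomial"
begin

text \<open>K is a type 'a with a non-archimedean absolute value absv; O = {x. absv x \<le> 1},
  m = {x. absv x < 1}. The residue field k is a type 'k together with a reduction map
  red which, restricted to O, is a surjective ring homomorphism onto 'k with kernel m
  (so 'k is isomorphic to O/m). Values of red outside O are irrelevant.\<close>

definition nonarch_abs :: "('a::field \<Rightarrow> real) \<Rightarrow> bool" where
  "nonarch_abs absv \<longleftrightarrow>
     absv 0 = 0 \<and> (\<forall>x. x \<noteq> 0 \<longrightarrow> absv x > 0) \<and>
     (\<forall>x y. absv (x * y) = absv x * absv y) \<and>
     (\<forall>x y. absv (x + y) \<le> max (absv x) (absv y))"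

definition complete_wrt :: "('a::field \<Rightarrow> real) \<Rightarrow> bool" where
  "complete_wrt absv \<longleftrightarrow>
     (\<forall>s :: nat \<Rightarrow> 'a.
        (\<forall>e>0. \<exists>N. \<forall>m\<ge>N. \<forall>n\<ge>N. absv (s m - s n) < e) \<longrightarrow>
        (\<exists>L. \<forall>e>0. \<exists>N. \<forall>n\<ge>N. absv (s n - L) < e))"

definition alg_closed :: "'a::field itself \<Rightarrow> bool" where
  "alg_closed _ \<longleftrightarrow> (\<forall>p :: 'a poly. degree p > 0 \<longrightarrow> (\<exists>x. poly p x = 0))"

definition residue_map :: "('a::field \<Rightarrow> real) \<Rightarrow> ('a \<Rightarrow> 'k::field) \<Rightarrow> bool" where
  "residue_map absv red \<longleftrightarrow>
     (\<forall>x y. absv x \<le> 1 \<longrightarrow> absv y \<le> 1 \<longrightarrow>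
        red (x + y) = red x + red y \<and> red (x * y) = red x * red y) \<and>
     red 1 = 1 \<and>
     (\<forall>x. absv x \<le> 1 \<longrightarrow> (red x = 0 \<longleftrightarrow> absv x < 1)) \<and>
     (\<forall>k. \<exists>x. absv x \<le> 1 \<and> red x = k)"

datatype 'b P1 = Fin 'b | Inf

text \<open>A homogeneous form F(X,Y) of degree d is represented by its dehomogenisation
  f(z) = F(z,1), a polynomial of degree \<le> d; F(1,0) = coeff f d.\<close>

definition form_eval :: "nat \<Rightarrow> 'b::comm_ring_1 poly \<Rightarrow> 'b P1 \<Rightarrow> 'b" where
  "form_eval d p x = (case x of Fin z \<Rightarrow> poly p z | Inf \<Rightarrow> coeff p d)"

definition map_eval :: "nat \<Rightarrow> 'b::field poly \<Rightarrow> 'b poly \<Rightarrow> 'b P1 \<Rightarrow> 'b P1" where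
  "map_eval d f g x =
     (if form_eval d g x \<noteq> 0 then Fin (form_eval d f x / form_eval d g x) else Inf)"

definition clfix :: "nat \<Rightarrow> 'b::field poly \<Rightarrow> 'b poly \<Rightarrow> 'b P1 set" where
  "clfix d f g = {x. map_eval d f g x = x}"

definition fin_multiplier :: "'b::field poly \<Rightarrow> 'b poly \<Rightarrow> 'b \<Rightarrow> 'b" where
  "fin_multiplier f g x =
     (poly (pderiv f) x * poly g x - poly f x * poly (pderiv g) x) / (poly g x)^2"

definition mob :: "'b::field \<Rightarrow> 'b \<Rightarrow> 'b \<Rightarrow> 'b \<Rightarrow> 'b P1 \<Rightarrow> 'b P1" where
  "mob p q r s = map_eval 1 [:q, p:] [:s, r:]"

definition conj_over :: "('b::field P1 \<Rightarrow> 'b P1) \<Rightarrow> ('b P1 \<Rightarrow> 'b P1) \<Rightarrow> bool" where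
  "conj_over \<psi> \<beta> \<longleftrightarrow>
     (\<exists>p q r s. p * s - q * r \<noteq> 0 \<and> (\<forall>x. \<psi> (mob p q r s x) = mob p q r s (\<beta> x)))"

definition phi_f :: "'a::field \<Rightarrow> 'a poly" where "phi_f l1 = [:0, l1, 1:]"
definition phi_g :: "'a::field \<Rightarrow> 'a poly" where "phi_g l2 = [:1, l2:]"

definition disc :: "('a::field \<Rightarrow> real) \<Rightarrow> 'a \<Rightarrow> real \<Rightarrow> 'a set" where
  "disc absv a r = {x. absv (x - a) \<le> r}"

text \<open>Type II points \<zeta>_{D(a,r)}, r \<in> |K^\<times>|, are identified with the discs D(a,r).\<close>
definition typeII :: "('a::field \<Rightarrow> real) \<Rightarrow> 'a set set" where
  "typeII absv = {D. \<exists>a c. c \<noteq> 0 \<and> D = disc absv a (absv c)}"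

text \<open>A chosen \<gamma>(z) = a + c z with \<gamma>(\<zeta>_G) = \<zeta>_D.\<close>
definition rep :: "('a::field \<Rightarrow> real) \<Rightarrow> 'a set \<Rightarrow> 'a \<times> 'a" where
  "rep absv D = (SOME ac. snd ac \<noteq> 0 \<and> D = disc absv (fst ac) (absv (snd ac)))"

text \<open>Lift of \<gamma>^{-1} \<circ> \<phi> \<circ> \<gamma> for \<gamma>(z) = a + c z.\<close>
definition conj_lift :: "'a::field poly \<Rightarrow> 'a poly \<Rightarrow> 'a \<Rightarrow> 'a \<Rightarrow> 'a poly \<times> 'a poly" where
  "conj_lift f g a c =
     (pcompose f [:a, c:] - smult a (pcompose g [:a, c:]), smult c (pcompose g [:a, c:]))"

definition all_coeffs :: "'a::zero poly \<times> 'a poly \<Rightarrow> 'a set" where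
  "all_coeffs fg = range (coeff (fst fg)) \<union> range (coeff (snd fg))"

definition norm_scalar :: "('a::field \<Rightarrow> real) \<Rightarrow> 'a poly \<times> 'a poly \<Rightarrow> 'a" where
  "norm_scalar absv fg =
     (SOME t. t \<noteq> 0 \<and> (\<forall>x\<in>all_coeffs fg. absv (t * x) \<le> 1) \<and>
              (\<exists>x\<in>all_coeffs fg. absv (t * x) = 1))"

definition red_pair :: "('a::field \<Rightarrow> real) \<Rightarrow> ('a \<Rightarrow> 'k::field) \<Rightarrow> 'a poly \<times> 'a poly
    \<Rightarrow> 'k poly \<times> 'k poly" where
  "red_pair absv red fg =
     (let t = norm_scalar absv fg
      in (map_poly red (smult t (fst fg)), map_poly red (smult t (snd fg))))"

definition red_lift_at :: "('a::field \<Rightarrow> real) \<Rightarrow> ('a \<Rightarrow> 'k::field) \<Rightarrow> 'a poly \<Rightarrow> 'a poly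
    \<Rightarrow> 'a set \<Rightarrow> 'k poly \<times> 'k poly" where
  "red_lift_at absv red f g D =
     (case rep absv D of (a, c) \<Rightarrow> red_pair absv red (conj_lift f g a c))"

definition common_factor :: "nat \<Rightarrow> 'k::field poly \<Rightarrow> 'k poly \<Rightarrow> nat \<Rightarrow> 'k poly \<times> 'k poly \<Rightarrow> bool" where
  "common_factor d F G e q \<longleftrightarrow>
     (\<exists>h. h \<noteq> 0 \<and> e \<le> d \<and> degree h \<le> e \<and> degree (fst q) \<le> d - e \<and> degree (snd q) \<le> d - e \<and>
          F = h * fst q \<and> G = h * snd q)"

definition cf_deg :: "nat \<Rightarrow> 'k::field poly \<Rightarrow> 'k poly \<Rightarrow> nat" where
  "cf_deg d F G = (GREATEST e. e \<le> d \<and> (\<exists>q. common_factor d F G e q))"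

definition red_quot :: "nat \<Rightarrow> 'k::field poly \<Rightarrow> 'k poly \<Rightarrow> 'k poly \<times> 'k poly" where
  "red_quot d F G = (SOME q. common_factor d F G (cf_deg d F G) q)"

definition red_deg_at :: "('a::field \<Rightarrow> real) \<Rightarrow> ('a \<Rightarrow> 'k::field) \<Rightarrow> nat \<Rightarrow> 'a poly \<Rightarrow> 'a poly
    \<Rightarrow> 'a set \<Rightarrow> nat" where
  "red_deg_at absv red d f g D =
     (case red_lift_at absv red f g D of (F, G) \<Rightarrow> d - cf_deg d F G)"

definition red_map_at :: "('a::field \<Rightarrow> real) \<Rightarrow> ('a \<Rightarrow> 'k::field) \<Rightarrow> nat \<Rightarrow> 'a poly \<Rightarrow> 'a poly
    \<Rightarrow> 'a set \<Rightarrow> 'k P1 \<Rightarrow> 'k P1" where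
  "red_map_at absv red d f g D =
     (case red_lift_at absv red f g D of (F, G) \<Rightarrow>
        (case red_quot d F G of (Q1, Q2) \<Rightarrow> map_eval (d - cf_deg d F G) Q1 Q2))"

text \<open>P is fixed iff \<phi>~_P is nonconstant.\<close>
definition fixedII :: "('a::field \<Rightarrow> real) \<Rightarrow> ('a \<Rightarrow> 'k::field) \<Rightarrow> nat \<Rightarrow> 'a poly \<Rightarrow> 'a poly
    \<Rightarrow> 'a set \<Rightarrow> bool" where
  "fixedII absv red d f g D \<longleftrightarrow> D \<in> typeII absv \<and> red_deg_at absv red d f g D \<ge> 1"

datatype 'a bpt = Cl "'a P1" | T2 "'a set"

text \<open>Tangent direction at the type II point D (identified with P^1(k) via the
  chosen \<gamma>) containing the point Q \<noteq> D.\<close>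
definition dir :: "('a::field \<Rightarrow> real) \<Rightarrow> ('a \<Rightarrow> 'k::field) \<Rightarrow> 'a set \<Rightarrow> 'a bpt \<Rightarrow> 'k P1" where
  "dir absv red D Q =
     (case rep absv D of (a, c) \<Rightarrow>
        (case Q of
           Cl Inf \<Rightarrow> Inf
         | Cl (Fin x) \<Rightarrow> (if absv (x - a) \<le> absv c then Fin (red ((x - a) / c)) else Inf)
         | T2 E \<Rightarrow> (if E \<subseteq> D then Fin (red (((SOME b. b \<in> E) - a) / c)) else Inf)))"

definition fixcl_pts :: "nat \<Rightarrow> 'a::field poly \<Rightarrow> 'a poly \<Rightarrow> 'a bpt set" where
  "fixcl_pts d f g = Cl ` clfix d f g"

text \<open>Generators of \<Gamma>_{Fix,Repel}: classical fixed points and type II fixed points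
  with deg \<phi>~_P \<ge> 2.\<close>
definition fixrep_pts :: "('a::field \<Rightarrow> real) \<Rightarrow> ('a \<Rightarrow> 'k::field) \<Rightarrow> nat \<Rightarrow> 'a poly \<Rightarrow> 'a poly
    \<Rightarrow> 'a bpt set" where
  "fixrep_pts absv red d f g =
     fixcl_pts d f g \<union> T2 ` {D. fixedII absv red d f g D \<and> red_deg_at absv red d f g D \<ge> 2}"

text \<open>Valence at D of the tree spanned by S = number of directions at D meeting it
  = number of directions at D containing points of S.\<close>
definition valence :: "('a::field \<Rightarrow> real) \<Rightarrow> ('a \<Rightarrow> 'k::field) \<Rightarrow> 'a bpt set \<Rightarrow> 'a set \<Rightarrow> nat" where
  "valence absv red S D = card (dir absv red D ` (S - {T2 D}))"

text \<open>D lies in \<Gamma>_Fix (type II point: at least two directions contain classical fixed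
  points), resp. is a branch point of \<Gamma>_Fix (at least three).\<close>
definition in_GammaFix :: "('a::field \<Rightarrow> real) \<Rightarrow> ('a \<Rightarrow> 'k::field) \<Rightarrow> nat \<Rightarrow> 'a poly \<Rightarrow> 'a poly
    \<Rightarrow> 'a set \<Rightarrow> bool" where
  "in_GammaFix absv red d f g D \<longleftrightarrow> D \<in> typeII absv \<and> valence absv red (fixcl_pts d f g) D \<ge> 2"

definition branch_GammaFix :: "('a::field \<Rightarrow> real) \<Rightarrow> ('a \<Rightarrow> 'k::field) \<Rightarrow> nat \<Rightarrow> 'a poly \<Rightarrow> 'a poly
    \<Rightarrow> 'a set \<Rightarrow> bool" where
  "branch_GammaFix absv red d f g D \<longleftrightarrow> D \<in> typeII absv \<and> valence absv red (fixcl_pts d f g) D \<ge> 3"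

text \<open>N(P): directions at P containing classical fixed points and moved by \<phi>_* = \<phi>~_P.\<close>
definition N_moved :: "('a::field \<Rightarrow> real) \<Rightarrow> ('a \<Rightarrow> 'k::field) \<Rightarrow> nat \<Rightarrow> 'a poly \<Rightarrow> 'a poly
    \<Rightarrow> 'a set \<Rightarrow> nat" where
  "N_moved absv red d f g D =
     card {v \<in> dir absv red D ` fixcl_pts d f g. red_map_at absv red d f g D v \<noteq> v}"

text \<open>The weight; it vanishes at points which are not of type II.\<close>
definition weight :: "('a::field \<Rightarrow> real) \<Rightarrow> ('a \<Rightarrow> 'k::field) \<Rightarrow> nat \<Rightarrow> 'a poly \<Rightarrow> 'a poly
    \<Rightarrow> 'a set \<Rightarrow> int" where
  "weight absv red d f g D =
     (if fixedII absv red d f g D then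
        int (red_deg_at absv red d f g D) - 1 + int (N_moved absv red d f g D)
      else if branch_GammaFix absv red d f g D then
        int (valence absv red (fixrep_pts absv red d f g) D) - 2
      else 0)"

definition W1 where
  "W1 absv red d f g D \<longleftrightarrow> fixedII absv red d f g D \<and> red_deg_at absv red d f g D \<ge> 2"

definition W2 where
  "W2 absv red d f g D \<longleftrightarrow> fixedII absv red d f g D \<and>
     (\<exists>c. c \<noteq> 0 \<and> c \<noteq> 1 \<and> conj_over (red_map_at absv red d f g D) (mob c 0 0 1)) \<and>
     branch_GammaFix absv red d f g D"

definition W3 where
  "W3 absv red d f g D \<longleftrightarrow> fixedII absv red d f g D \<and>
     (\<exists>a. a \<noteq> 0 \<and> conj_over (red_map_at absv red d f g D) (mob 1 a 0 1)) \<and>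
     in_GammaFix absv red d f g D"

definition W4 where
  "W4 absv red d f g D \<longleftrightarrow> branch_GammaFix absv red d f g D \<and> \<not> fixedII absv red d f g D"

end

theory Submission
  imports Defs
begin


locale va =
  fixes absv :: "'a::field \<Rightarrow> real" and red :: "'a \<Rightarrow> 'k::field"
  assumes na: "nonarch_abs absv" and rm: "residue_map absv red"
begin

lemma av0[simp]: "absv 0 = 0" using na unfolding nonarch_abs_def by auto
lemma avpos: "x \<noteq> 0 \<Longrightarrow> absv x > 0" using na unfolding nonarch_abs_def by auto
lemma avnn[simp]: "absv x \<ge> 0" using avpos[of x] by (cases "x = 0") auto
lemma avmult[simp]: "absv (x * y) = absv x * absv y" using na unfolding nonarch_abs_def by auto
lemma avadd: "absv (x + y) \<le> max (absv x) (absv y)" using na unfolding nonarch_abs_def by auto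
lemma av0_iff[simp]: "absv x = 0 \<longleftrightarrow> x = 0" by (cases "x = 0") (auto dest: avpos)
lemma av1[simp]: "absv 1 = 1"
proof -
  have "absv 1 = absv 1 * absv 1" using avmult[of 1 1] by simp
  moreover have "absv 1 > 0" using avpos[of 1] by simp
  ultimately show ?thesis by (metis mult_cancel_right1 less_irrefl)
qed
lemma avm1[simp]: "absv (-1) = 1"
proof -
  have "absv (-1) * absv (-1) = 1" using avmult[of "-1" "-1"] by simp
  moreover have "absv (-1) \<ge> 0" by simp
  ultimately show ?thesis by (metis abs_of_nonneg abs_square_eq_1 power2_eq_square)
qed
lemma avneg[simp]: "absv (- x) = absv x"
  using avmult[of "-1" x] by simp
lemma avsub: "absv (x - y) \<le> max (absv x) (absv y)"
  using avadd[of x "-y"] by simp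
lemma avsym: "absv (x - y) = absv (y - x)"
  using avneg[of "x - y"] by simp
lemma avstrict: "absv x < absv y \<Longrightarrow> absv (x + y) = absv y"
proof -
  assume a: "absv x < absv y"
  have 1: "absv (x + y) \<le> absv y" using avadd[of x y] a by simp
  have "absv y \<le> max (absv (x+y)) (absv x)" using avsub[of "x+y" x] by simp
  with a have "absv y \<le> absv (x + y)" by (auto simp: max_def split: if_splits)
  with 1 show ?thesis by simp
qed
lemma avstrict2: "absv y < absv x \<Longrightarrow> absv (x + y) = absv x"
  using avstrict[of y x] by (simp add: add.commute)
lemma avstrict_sub: "absv y < absv x \<Longrightarrow> absv (x - y) = absv x"
  using avstrict2[of "-y" x] by simp
lemma avstrict_sub2: "absv x < absv y \<Longrightarrow> absv (x - y) = absv y"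
  using avstrict[of x "-y"] by simp
lemma avinv[simp]: "absv (inverse x) = inverse (absv x)"
proof (cases "x = 0")
  case False
  then have "absv x * absv (inverse x) = 1" using avmult[of x "inverse x"] by simp
  then show ?thesis using inverse_unique by metis
qed simp
lemma avdiv[simp]: "absv (x / y) = absv x / absv y"
  by (simp add: divide_inverse)
lemma avpow[simp]: "absv (x ^ n) = absv x ^ n"
  by (induction n) auto
lemma av2: "absv (2::'a) \<le> 1"
proof -
  have "absv (1 + 1 :: 'a) \<le> 1" using avadd[of 1 1] by (simp only: av1 max.idem)
  then show ?thesis by (simp only: one_add_one)
qed
lemma avadd_le: "absv x \<le> r \<Longrightarrow> absv y \<le> r \<Longrightarrow> absv (x + y) \<le> r"
  using avadd[of x y] by simp
lemma avsub_le: "absv x \<le> r \<Longrightarrow> absv y \<le> r \<Longrightarrow> absv (x - y) \<le> r"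
  using avsub[of x y] by simp
lemma avadd_lt: "absv x < r \<Longrightarrow> absv y < r \<Longrightarrow> absv (x + y) < r"
  using avadd[of x y] by simp
lemma avsub_lt: "absv x < r \<Longrightarrow> absv y < r \<Longrightarrow> absv (x - y) < r"
  using avsub[of x y] by simp

lemma red_add: "absv x \<le> 1 \<Longrightarrow> absv y \<le> 1 \<Longrightarrow> red (x + y) = red x + red y"
  using rm unfolding residue_map_def by blast
lemma red_mult: "absv x \<le> 1 \<Longrightarrow> absv y \<le> 1 \<Longrightarrow> red (x * y) = red x * red y"
  using rm unfolding residue_map_def by blast
lemma red1[simp]: "red 1 = 1" using rm unfolding residue_map_def by blast
lemma red_zero_iff: "absv x \<le> 1 \<Longrightarrow> red x = 0 \<longleftrightarrow> absv x < 1"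
  using rm unfolding residue_map_def by blast
lemma red_surj: "\<exists>x. absv x \<le> 1 \<and> red x = k" using rm unfolding residue_map_def by blast
lemma red0[simp]: "red 0 = 0" using red_zero_iff[of 0] by simp
lemma red_neg: "absv x \<le> 1 \<Longrightarrow> red (- x) = - red x"
  using red_add[of x "-x"] by (simp add: eq_neg_iff_add_eq_0 add.commute)
lemma red_sub: "absv x \<le> 1 \<Longrightarrow> absv y \<le> 1 \<Longrightarrow> red (x - y) = red x - red y"
  using red_add[of x "-y"] red_neg[of y] by simp
lemma red_nz_iff: "absv x \<le> 1 \<Longrightarrow> red x \<noteq> 0 \<longleftrightarrow> absv x = 1"
  using red_zero_iff[of x] by auto
lemma red_eq_iff: "absv x \<le> 1 \<Longrightarrow> absv y \<le> 1 \<Longrightarrow> red x = red y \<longleftrightarrow> absv (x - y) < 1"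
  using red_sub[of x y] red_zero_iff[of "x - y"] avsub_le[of x 1 y] by auto
lemma red2: "red 2 = 2"
proof -
  have "red (1+1::'a) = red 1 + red 1" by (rule red_add) simp_all
  then show ?thesis by (simp only: red1 one_add_one)
qed
lemma red_inv: "absv x = 1 \<Longrightarrow> red (inverse x) = inverse (red x)"
proof -
  assume a: "absv x = 1"
  then have "x \<noteq> 0" by auto
  have "red (x * inverse x) = red x * red (inverse x)" by (rule red_mult) (use a in auto)
  then have "red x * red (inverse x) = 1" using \<open>x \<noteq> 0\<close> by simp
  then show ?thesis using inverse_unique by metis
qed
lemma red_divide: "absv x \<le> 1 \<Longrightarrow> absv y = 1 \<Longrightarrow> red (x / y) = red x / red y"
  by (simp add: divide_inverse red_mult red_inv)

end



lemma deg0_form: "degree (p::'k::field poly) \<le> 0 \<Longrightarrow> p = [:coeff p 0:]"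
  using degree_0_id[of p] by simp
lemma deg1_form: "degree (p::'k::field poly) \<le> 1 \<Longrightarrow> p = [:coeff p 0, coeff p 1:]"
  by (rule poly_eqI) (auto simp: coeff_pCons coeff_eq_0 split: nat.splits)
lemma deg2_form: "degree (p::'k::field poly) \<le> 2 \<Longrightarrow> p = [:coeff p 0, coeff p 1, coeff p 2:]"
  by (rule poly_eqI) (auto simp: coeff_pCons coeff_eq_0 numeral_2_eq_2 split: nat.splits)

lemma cf_base: "degree F \<le> d \<Longrightarrow> degree G \<le> d \<Longrightarrow> common_factor d (F::'k::field poly) G 0 (F, G)"
  unfolding common_factor_def by (rule exI[of _ 1]) simp

lemma cf_deg_props:
  assumes "degree F \<le> d" "degree (G::'k::field poly) \<le> d"
  shows "cf_deg d F G \<le> d" "\<exists>q. common_factor d F G (cf_deg d F G) q"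
    "\<And>e q. common_factor d F G e q \<Longrightarrow> e \<le> cf_deg d F G"
proof -
  let ?P = "\<lambda>e. e \<le> d \<and> (\<exists>q. common_factor d F G e q)"
  have P0: "?P 0" using cf_base[OF assms] by blast
  have bnd: "\<forall>y. ?P y \<longrightarrow> y \<le> d" by blast
  have "?P (cf_deg d F G)" unfolding cf_deg_def by (rule GreatestI_nat[where P="?P", OF P0]) (use bnd in blast)
  then show "cf_deg d F G \<le> d" "\<exists>q. common_factor d F G (cf_deg d F G) q" by auto
  fix e q assume "common_factor d F G e q"
  then have "?P e" unfolding common_factor_def by blast
  then show "e \<le> cf_deg d F G" unfolding cf_deg_def by (rule Greatest_le_nat[where P="?P"]) (use bnd in blast)
qed

lemma red_quot_props:
  assumes "degree F \<le> d" "degree (G::'k::field poly) \<le> d"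
  shows "common_factor d F G (cf_deg d F G) (red_quot d F G)"
  unfolding red_quot_def using cf_deg_props(2)[OF assms] by (rule someI_ex)

context
  fixes f0 f1 f2 g0 g1 :: "'k::field"
  assumes nz: "[:f0,f1,f2:] \<noteq> 0 \<or> [:g0,g1:] \<noteq> 0"
begin

abbreviation "FF \<equiv> [:f0,f1,f2:]"
abbreviation "GG \<equiv> [:g0,g1:]"
abbreviation "cf \<equiv> cf_deg 2 FF GG"
abbreviation "mp \<equiv> (case red_quot 2 FF GG of (Q1, Q2) \<Rightarrow> map_eval (2 - cf) Q1 Q2)"

lemma dF: "degree FF \<le> 2" by (simp add: degree_pCons_le)
lemma dG: "degree GG \<le> 2" by (rule order.trans[OF degree_pCons_le]) (simp add: degree_pCons_le)

lemma cfle: "cf \<le> 2" using cf_deg_props(1)[OF dF dG] .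
lemma cfge: "common_factor 2 FF GG e q \<Longrightarrow> e \<le> cf" using cf_deg_props(3)[OF dF dG] .
lemma cfq: "common_factor 2 FF GG cf (red_quot 2 FF GG)" using red_quot_props[OF dF dG] .

lemma L_G0: "g0 = 0 \<Longrightarrow> g1 = 0 \<Longrightarrow> cf = 2"
proof -
  assume "g0 = 0" "g1 = 0"
  have "common_factor 2 FF GG 2 (1, 0)"
    unfolding common_factor_def using nz \<open>g0 = 0\<close> \<open>g1 = 0\<close>
    by (intro exI[of _ FF]) (simp add: dF)
  then show ?thesis using cfge cfle by fastforce
qed

lemma L_prop: "cf = 2 \<Longrightarrow> \<exists>q1 q2. (q1 \<noteq> 0 \<or> q2 \<noteq> 0) \<and> smult q2 FF = smult q1 GG"
proof -
  assume "cf = 2"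
  with cfq obtain h Q1 Q2 where h: "h \<noteq> 0" "degree Q1 \<le> 0" "degree Q2 \<le> 0" "FF = h * Q1" "GG = h * Q2"
    unfolding common_factor_def by (cases "red_quot 2 FF GG") auto
  define c1 where "c1 = coeff Q1 0"
  define c2 where "c2 = coeff Q2 0"
  from h have Q1: "Q1 = [:c1:]" and Q2: "Q2 = [:c2:]" using deg0_form unfolding c1_def c2_def by auto
  have "smult c2 FF = smult c1 GG"
    using h(4,5) unfolding Q1 Q2 by (simp add: mult.commute)
  moreover have "c1 \<noteq> 0 \<or> c2 \<noteq> 0"
    using nz h(4,5) unfolding Q1 Q2 by auto
  ultimately show ?thesis by blast
qed

lemma L_C1: "f2 \<noteq> 0 \<Longrightarrow> (g0 \<noteq> 0 \<or> g1 \<noteq> 0) \<Longrightarrow> cf \<noteq> 2"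
proof
  assume a: "f2 \<noteq> 0" "g0 \<noteq> 0 \<or> g1 \<noteq> 0" "cf = 2"
  then obtain q1 q2 where q: "q1 \<noteq> 0 \<or> q2 \<noteq> 0" "smult q2 FF = smult q1 GG" using L_prop by blast
  from q(2) have "q2 * f2 = 0" "q2 * f1 = q1 * g1" "q2 * f0 = q1 * g0" by auto
  with a q(1) show False by auto
qed

lemma L_C2: "f0 + v*(f1 + v*f2) = v * (g0 + v * g1) \<Longrightarrow> g0 + v * g1 \<noteq> 0 \<Longrightarrow> f1 + 2*f2*v - v*g1 \<noteq> 0 \<Longrightarrow> cf \<noteq> 2"
proof
  assume a: "f0 + v*(f1 + v*f2) = v * (g0 + v * g1)" "g0 + v * g1 \<noteq> 0" "f1 + 2*f2*v - v*g1 \<noteq> 0" "cf = 2"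
  then obtain q1 q2 where q: "q1 \<noteq> 0 \<or> q2 \<noteq> 0" "smult q2 FF = smult q1 GG" using L_prop by blast
  from q(2) have e: "q2 * f2 = 0" "q2 * f1 = q1 * g1" "q2 * f0 = q1 * g0" by auto
  have "q2 * (f0 + v*(f1 + v*f2)) = q2*f0 + v*(q2*f1) + v*v*(q2*f2)" by (simp add: algebra_simps)
  also have "\<dots> = q1 * (g0 + v * g1)" by (simp only: e) (simp add: algebra_simps)
  finally have "q2 * (f0 + v*(f1 + v*f2)) = q1 * (g0 + v * g1)" .
  with a(1) have "(q2 * v - q1) * (g0 + v * g1) = 0" by (simp add: algebra_simps)
  with a(2) have q1: "q1 = q2 * v" by simp
  with q(1) have "q2 \<noteq> 0" by auto
  have f2: "f2 = 0" using e(1) \<open>q2 \<noteq> 0\<close> by simp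
  have "q2 * f1 = q2 * (v * g1)" using e(2) q1 by (simp add: algebra_simps)
  then have "f1 = v*g1" using \<open>q2 \<noteq> 0\<close> by simp
  with f2 a(3) show False by (simp add: algebra_simps)
qed

lemma L_deg2: "cf = 0 \<Longrightarrow> f2 \<noteq> 0 \<and> f2*g0^2 - f1*g0*g1 + f0*g1^2 \<noteq> 0"
proof
  assume c0: "cf = 0"
  show f2: "f2 \<noteq> 0"
  proof
    assume "f2 = 0"
    have "common_factor 2 FF GG 1 (FF, GG)"
      unfolding common_factor_def using \<open>f2 = 0\<close>
      by (intro exI[of _ 1]) (simp add: degree_pCons_le)
    then show False using cfge c0 by fastforce
  qed
  show "f2*g0^2 - f1*g0*g1 + f0*g1^2 \<noteq> 0"
  proof
    assume R: "f2*g0^2 - f1*g0*g1 + f0*g1^2 = 0"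
    show False
    proof (cases "g1 = 0")
      case True
      with R f2 have "g0 = 0" by simp
      with True L_G0 c0 show False by simp
    next
      case False
      define v where "v = - g0 / g1"
      have Fv: "f0 + v*(f1 + v*f2) = 0"
      proof -
        have "(f0 + v*(f1 + v*f2)) * g1^2 = f2*g0^2 - f1*g0*g1 + f0*g1^2"
          using False unfolding v_def by (simp add: field_simps power2_eq_square)
        with R False show ?thesis by simp
      qed
      have "common_factor 2 FF GG 1 ([:f1 + f2*v, f2:], [:g1:])"
        unfolding common_factor_def
      proof (intro exI[of _ "[:-v, 1:]"] conjI)
        have hf0: "f0 = -(v*(f1 + v*f2))" using Fv by (simp add: eq_neg_iff_add_eq_0)
        show "FF = [:-v,1:] * fst ([:f1 + f2*v, f2:], [:g1:])"
          using hf0 by (simp add: algebra_simps)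
        show "GG = [:-v,1:] * snd ([:f1 + f2*v, f2:], [:g1:])"
          using False unfolding v_def by (simp add: field_simps)
      qed (auto simp: degree_pCons_le)
      then show False using cfge c0 by fastforce
    qed
  qed
qed

lemma cfq': obtains h Q1 Q2 where "red_quot 2 FF GG = (Q1, Q2)" "h \<noteq> 0" "cf \<le> 2" "degree h \<le> cf"
   "degree Q1 \<le> 2 - cf" "degree Q2 \<le> 2 - cf" "FF = h * Q1" "GG = h * Q2"
    "mp = map_eval (2 - cf) Q1 Q2"
proof -
  obtain Q1 Q2 where rq: "red_quot 2 FF GG = (Q1, Q2)" by (cases "red_quot 2 FF GG")
  with cfq obtain h where "h \<noteq> 0" "cf \<le> 2" "degree h \<le> cf"
   "degree Q1 \<le> 2 - cf" "degree Q2 \<le> 2 - cf" "FF = h * Q1" "GG = h * Q2"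
    unfolding common_factor_def by auto
  with rq show ?thesis using that by simp
qed

lemma L_inf: "cf \<le> 1 \<Longrightarrow> mp Inf \<noteq> Inf \<Longrightarrow> f2 = 0 \<and> g1 \<noteq> 0"
proof -
  assume c1: "cf \<le> 1" and mi: "mp Inf \<noteq> Inf"
  obtain h Q1 Q2 where q: "red_quot 2 FF GG = (Q1, Q2)" "h \<noteq> 0" "cf \<le> 2" "degree h \<le> cf"
   "degree Q1 \<le> 2 - cf" "degree Q2 \<le> 2 - cf" "FF = h * Q1" "GG = h * Q2"
    "mp = map_eval (2 - cf) Q1 Q2" by (rule cfq')
  have cQ: "coeff Q2 (2 - cf) \<noteq> 0" using mi q(9) unfolding map_eval_def form_eval_def by (auto split: if_splits)
  show ?thesis
  proof (cases "cf = 0")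
    case True
    then have "h = [:coeff h 0:]" using q(4) deg0_form by auto
    then have "coeff GG 2 = coeff h 0 * coeff Q2 2" using q(8) by (metis coeff_smult mult_pCons_left mult_zero_left pCons_0_0 add_0_right smult_0_left) 
    moreover have "coeff h 0 \<noteq> 0" using q(2) \<open>h = [:coeff h 0:]\<close> by (metis pCons_0_0)
    ultimately show ?thesis using cQ True by (simp add: numeral_2_eq_2)
  next
    case False
    with c1 have c: "cf = 1" by simp
    define h0 h1 q0 q1 p0 p1 where "h0 = coeff h 0" "h1 = coeff h 1" "q0 = coeff Q1 0" "q1 = coeff Q1 1"
      "p0 = coeff Q2 0" "p1 = coeff Q2 1"
    have H: "h = [:h0,h1:]" "Q1 = [:q0,q1:]" "Q2 = [:p0,p1:]"
      using q(4,5,6) c deg1_form unfolding h0_h1_q0_q1_p0_p1_def by auto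
    from q(7,8) have e: "f0 = h0*q0" "f1 = h0*q1 + h1*q0" "f2 = h1*q1" "g0 = h0*p0" "g1 = h0*p1 + h1*p0" "h1*p1 = 0"
      unfolding H by (simp_all add: algebra_simps)
    have "p1 \<noteq> 0" using cQ c H by simp
    then have "h1 = 0" using e(6) by simp
    then have "h0 \<noteq> 0" using q(2) H by simp
    show ?thesis using e \<open>h1 = 0\<close> \<open>h0 \<noteq> 0\<close> \<open>p1 \<noteq> 0\<close> by simp
  qed
qed

lemma L_hole:
  assumes c1: "cf \<le> 1" and Fv: "f0 + v*(f1+v*f2) = v*(g0 + v*g1)" and mv: "mp (Fin v) \<noteq> Fin v"
  shows "g0 + v*g1 = 0" "f1 + 2*f2*v - v*g1 \<noteq> 0" "f2 \<noteq> 0" "g1 \<noteq> 0" "cf = 1" "mp Inf = Inf"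
    "\<exists>\<beta>. \<forall>y. mp (Fin y) = Fin (f2/g1*y + \<beta>)"
proof -
  obtain h Q1 Q2 where q: "red_quot 2 FF GG = (Q1, Q2)" "h \<noteq> 0" "cf \<le> 2" "degree h \<le> cf"
   "degree Q1 \<le> 2 - cf" "degree Q2 \<le> 2 - cf" "FF = h * Q1" "GG = h * Q2"
    "mp = map_eval (2 - cf) Q1 Q2" by (rule cfq')
  have hv: "poly h v = 0"
  proof (rule ccontr)
    assume hv: "poly h v \<noteq> 0"
    have pF: "poly FF v = poly h v * poly Q1 v" using q(7) by (metis poly_mult)
    have pG: "poly GG v = poly h v * poly Q2 v" using q(8) by (metis poly_mult)
    have "poly FF v = v * poly GG v" using Fv by simp
    then have "poly h v * poly Q1 v = v * (poly h v * poly Q2 v)" unfolding pF pG .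
    then have "poly h v * poly Q1 v = poly h v * (v * poly Q2 v)" by (simp add: algebra_simps)
    then have Q1v: "poly Q1 v = v * poly Q2 v" using hv by simp
    have Q2v: "poly Q2 v = 0"
    proof (rule ccontr)
      assume "poly Q2 v \<noteq> 0"
      then have "mp (Fin v) = Fin v" using Q1v q(9) unfolding map_eval_def form_eval_def by simp
      with mv show False by simp
    qed
    with Q1v have Q1v': "poly Q1 v = 0" by simp
    obtain R1 where R1: "Q1 = [:-v,1:] * R1" using Q1v' by (metis dvdE poly_eq_0_iff_dvd)
    obtain R2 where R2: "Q2 = [:-v,1:] * R2" using Q2v by (metis dvdE poly_eq_0_iff_dvd)
    have dR: "degree R \<le> 1 - cf" if "Q = [:-v,1:] * R" "degree Q \<le> 2 - cf" for Q R
    proof (cases "R = 0")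
      case False
      have "degree ([:-v,1:] * R) = degree [:-v,1:] + degree R"
        using False by (intro degree_mult_eq) auto
      then have "degree Q = 1 + degree R" using that(1) by simp
      then show ?thesis using that(2) by simp
    qed simp
    have "common_factor 2 FF GG (cf + 1) (R1, R2)"
      unfolding common_factor_def
    proof (intro exI[of _ "h * [:-v,1:]"] conjI)
      have "[:-v,1:] \<noteq> (0::'k poly)" by simp
      then show "h * [:-v,1:] \<noteq> 0" using q(2) by (metis mult_eq_0_iff)
      show "degree (h * [:- v, 1:]) \<le> cf + 1"
        using degree_mult_le[of h "[:-v,1:]"] q(4) by simp
      show "cf + 1 \<le> 2" using c1 by simp
      show "degree (fst (R1, R2)) \<le> 2 - (cf + 1)" using dR[OF R1 q(5)] by simp
      show "degree (snd (R1, R2)) \<le> 2 - (cf + 1)" using dR[OF R2 q(6)] by simp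
      show "FF = h * [:- v, 1:] * fst (R1, R2)" using q(7) R1 by (simp only: fst_conv mult.assoc)
      show "GG = h * [:- v, 1:] * snd (R1, R2)" using q(8) R2 by (simp only: snd_conv mult.assoc)
    qed
    then have "cf + 1 \<le> cf" by (rule cfge)
    then show False by simp
  qed
  have "cf \<noteq> 0"
  proof
    assume "cf = 0"
    then have "h = [:coeff h 0:]" using q(4) deg0_form by auto
    then have "poly h v = coeff h 0" by (metis poly_pCons poly_0 mult_zero_right add_0_right)
    with hv q(2) \<open>h = [:coeff h 0:]\<close> show False by (metis pCons_0_0)
  qed
  with c1 show c: "cf = 1" by simp
  define h0 h1 q0 q1 p0 p1 where "h0 = coeff h 0" "h1 = coeff h 1" "q0 = coeff Q1 0" "q1 = coeff Q1 1"
    "p0 = coeff Q2 0" "p1 = coeff Q2 1"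
  have H: "h = [:h0,h1:]" "Q1 = [:q0,q1:]" "Q2 = [:p0,p1:]"
    using q(4,5,6) c deg1_form unfolding h0_h1_q0_q1_p0_p1_def by auto
  from q(7,8) have e: "f0 = h0*q0" "f1 = h0*q1 + h1*q0" "f2 = h1*q1" "g0 = h0*p0" "g1 = h0*p1 + h1*p0" "h1*p1 = 0"
    unfolding H by (simp_all add: algebra_simps)
  have hv': "h0 + v*h1 = 0" using hv H by simp
  have "h1 \<noteq> 0" using hv' q(2) H by auto
  then have "p1 = 0" using e(6) by simp
  have h0: "h0 = - (v*h1)" using hv' by (simp add: eq_neg_iff_add_eq_0)
  show "g0 + v*g1 = 0" using e(4,5) h0 \<open>p1 = 0\<close> by (simp add: algebra_simps)
  have "p0 \<noteq> 0"
  proof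
    assume "p0 = 0"
    then have "g0 = 0" "g1 = 0" using e \<open>p1 = 0\<close> by auto
    then have "cf = 2" by (rule L_G0)
    with c show False by simp
  qed
  have "q1 \<noteq> 0"
  proof
    assume "q1 = 0"
    have "common_factor 2 FF GG 2 ([:q0:], [:p0:])"
      unfolding common_factor_def
      by (intro exI[of _ h] conjI) (use q(2,4,7,8) c H \<open>q1 = 0\<close> \<open>p1 = 0\<close> in auto)
    then have "2 \<le> cf" by (rule cfge)
    with c show False by simp
  qed
  show "f2 \<noteq> 0" using e(3) \<open>h1 \<noteq> 0\<close> \<open>q1 \<noteq> 0\<close> by simp
  show "g1 \<noteq> 0" using e(5) \<open>h1 \<noteq> 0\<close> \<open>p0 \<noteq> 0\<close> \<open>p1 = 0\<close> by simp
  have mpF: "mp (Fin y) = Fin ((q0 + y*q1)/p0)" for y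
    using q(9) c H \<open>p1 = 0\<close> \<open>p0 \<noteq> 0\<close> unfolding map_eval_def form_eval_def by simp
  show "mp Inf = Inf" using q(9) c H \<open>p1 = 0\<close> unfolding map_eval_def form_eval_def by simp
  show "\<exists>\<beta>. \<forall>y. mp (Fin y) = Fin (f2/g1*y + \<beta>)"
  proof (intro exI allI)
    fix y
    have "f2/g1 = q1/p0" using e(3,5) \<open>p1 = 0\<close> \<open>h1 \<noteq> 0\<close> by simp
    moreover have "mp (Fin y) = Fin (q1/p0*y + q0/p0)" using mpF[of y] \<open>p0 \<noteq> 0\<close> by (simp add: add_divide_distrib)
    ultimately show "mp (Fin y) = Fin (f2/g1*y + q0/p0)" by simp
  qed
  have "q0 + v*q1 \<noteq> v*p0"
  proof
    assume "q0 + v*q1 = v*p0"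
    then have "mp (Fin v) = Fin v" using mpF[of v] \<open>p0 \<noteq> 0\<close> by (simp add: field_simps)
    with mv show False by simp
  qed
  moreover have "f1 + 2*f2*v - v*g1 = h1 * (q0 + v*q1 - v*p0)"
    using e h0 \<open>p1 = 0\<close> by (simp add: algebra_simps)
  ultimately show "f1 + 2*f2*v - v*g1 \<noteq> 0" using \<open>h1 \<noteq> 0\<close> by simp
qed

end



definition inO :: "('a \<Rightarrow> real) \<Rightarrow> 'a \<Rightarrow> bool" where "inO absv x \<longleftrightarrow> absv x \<le> 1"

context va begin

lemma inO_add[simp]: "inO absv x \<Longrightarrow> inO absv y \<Longrightarrow> inO absv (x + y)"
  unfolding inO_def using avadd_le by blast
lemma inO_sub[simp]: "inO absv x \<Longrightarrow> inO absv y \<Longrightarrow> inO absv (x - y)"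
  unfolding inO_def using avsub_le by blast
lemma inO_mult[simp]: "inO absv x \<Longrightarrow> inO absv y \<Longrightarrow> inO absv (x * y)"
  unfolding inO_def by (simp add: mult_le_one)
lemma inO_neg[simp]: "inO absv x \<Longrightarrow> inO absv (- x)"
  unfolding inO_def by simp
lemma inO_1[simp]: "inO absv 1" unfolding inO_def by simp
lemma inO_0[simp]: "inO absv 0" unfolding inO_def by simp
lemma inO_2[simp]: "inO absv 2" unfolding inO_def by (rule av2)
lemma inO_pow[simp]: "inO absv x \<Longrightarrow> inO absv (x ^ n)"
  by (induction n) simp_all
lemma redO_add[simp]: "inO absv x \<Longrightarrow> inO absv y \<Longrightarrow> red (x + y) = red x + red y"
  unfolding inO_def by (rule red_add)
lemma redO_sub[simp]: "inO absv x \<Longrightarrow> inO absv y \<Longrightarrow> red (x - y) = red x - red y"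
  unfolding inO_def by (rule red_sub)
lemma redO_mult[simp]: "inO absv x \<Longrightarrow> inO absv y \<Longrightarrow> red (x * y) = red x * red y"
  unfolding inO_def by (rule red_mult)
lemma redO_neg[simp]: "inO absv x \<Longrightarrow> red (- x) = - red x"
  unfolding inO_def by (rule red_neg)
lemma redO_pow[simp]: "inO absv x \<Longrightarrow> red (x ^ n) = red x ^ n"
  by (induction n) simp_all

lemma map_poly_red_smult: "coeff (map_poly red (smult t p)) n = red (t * coeff p n)"
  by (simp add: coeff_map_poly)

lemma disc_eq: "absv (a - b) \<le> r \<Longrightarrow> disc absv a r = disc absv b r"
proof -
  assume ab: "absv (a - b) \<le> r"
  have "absv (x - a) \<le> r \<longleftrightarrow> absv (x - b) \<le> r" for x
  proof
    assume "absv (x - a) \<le> r"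
    moreover have "x - b = (x - a) + (a - b)" by simp
    ultimately show "absv (x - b) \<le> r" using avadd_le ab by metis
  next
    assume "absv (x - b) \<le> r"
    moreover have "x - a = (x - b) - (a - b)" by simp
    ultimately show "absv (x - a) \<le> r" using avsub_le ab by metis
  qed
  then show ?thesis unfolding disc_def by auto
qed

end

locale P = va absv red for absv :: "'a::field \<Rightarrow> real" and red :: "'a \<Rightarrow> 'k::field" +
  fixes l1 l2 :: 'a
  assumes l12: "l1 * l2 \<noteq> 1" and l2n1: "l2 \<noteq> 1" and a3nz: "(l1 - 1) / (l2 - 1) \<noteq> 0"
begin

definition "al3 = (l1 - 1) / (l2 - 1)"
abbreviation "f \<equiv> phi_f l1"
abbreviation "g \<equiv> phi_g l2"

lemma l2m1: "l2 - 1 \<noteq> 0" using l2n1 by simp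
lemma al3nz: "al3 \<noteq> 0" using a3nz unfolding al3_def .
lemma l1n1: "l1 \<noteq> 1" using a3nz by auto
lemma gal3: "1 + l2 * al3 = (l1*l2 - 1)/(l2 - 1)"
  unfolding al3_def using l2m1 by (simp add: field_simps)
lemma gal3nz: "1 + l2 * al3 \<noteq> 0" using l12 l2m1 gal3 by simp
lemma mual3: "l1 + al3 * (2 - l2) = (l1 + l2 - 2)/(l2 - 1)"
  unfolding al3_def using l2m1 by (simp add: field_simps)

lemma clfix_eq: "clfix 2 f g = {Fin 0, Fin al3, Inf}"
proof -
  have fin: "map_eval 2 f g (Fin z) = Fin z \<longleftrightarrow> z = 0 \<or> z = al3" for z
  proof (cases "1 + l2 * z = 0")
    case True
    then have "z \<noteq> 0" by auto
    moreover have "z \<noteq> al3" using True gal3nz by auto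
    ultimately show ?thesis using True unfolding map_eval_def form_eval_def phi_g_def by (simp add: algebra_simps)
  next
    case False
    have "map_eval 2 f g (Fin z) = Fin z \<longleftrightarrow> z*z + l1*z = z * (1 + l2*z)"
      using False unfolding map_eval_def form_eval_def phi_f_def phi_g_def
      by (auto simp: field_simps)
    also have "\<dots> \<longleftrightarrow> z * ((1 - l2)*z + (l1 - 1)) = 0" by (simp add: algebra_simps)
    also have "\<dots> \<longleftrightarrow> z = 0 \<or> (1 - l2)*z + (l1 - 1) = 0" by simp
    also have "(1 - l2)*z + (l1 - 1) = 0 \<longleftrightarrow> z = al3"
    proof -
      have e: "(1-l2)*z + (l1-1) = -(z*(l2-1) - (l1-1))" by (simp add: algebra_simps)
      have "z = al3 \<longleftrightarrow> z*(l2-1) = l1-1" unfolding al3_def using l2m1 by (simp add: eq_divide_eq)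
      moreover have "-(z*(l2-1) - (l1-1)) = 0 \<longleftrightarrow> z*(l2-1) = l1-1" by (simp only: neg_equal_0_iff_equal right_minus_eq)
      ultimately show ?thesis unfolding e by simp
    qed
    finally show ?thesis .
  qed
  have inf: "map_eval 2 f g Inf = Inf"
    unfolding map_eval_def form_eval_def phi_g_def by (simp add: numeral_2_eq_2)
  show ?thesis
  proof (rule set_eqI)
    fix x show "x \<in> clfix 2 f g \<longleftrightarrow> x \<in> {Fin 0, Fin al3, Inf}"
      using fin inf unfolding clfix_def by (cases x) auto
  qed
qed

lemma conj_lift_eq: "conj_lift f g a c =
  ([:a*(a*(1-l2) + l1 - 1), c*(l1 + a*(2-l2)), c^2:], [:c*(1+l2*a), l2*c^2:])"
  unfolding conj_lift_def phi_f_def phi_g_def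
  by (simp add: pcompose_pCons algebra_simps power2_eq_square)

lemma all_coeffs_sub: "all_coeffs ([:x0,x1,x2:], [:y0,y1:]) \<subseteq> {x0,x1,x2,y0,y1,0}"
  unfolding all_coeffs_def by (auto simp: coeff_pCons split: nat.splits)
lemma all_coeffs_in: "{x0,x1,x2,y0,y1} \<subseteq> all_coeffs ([:x0,x1,x2:], [:y0,y1:])"
proof -
  have "x0 \<in> range (coeff [:x0,x1,x2:])" by (rule range_eqI[of _ _ 0]) simp
  moreover have "x1 \<in> range (coeff [:x0,x1,x2:])" by (rule range_eqI[of _ _ 1]) simp
  moreover have "x2 \<in> range (coeff [:x0,x1,x2:])" by (rule range_eqI[of _ _ 2]) (simp add: numeral_2_eq_2)
  moreover have "y0 \<in> range (coeff [:y0,y1:])" by (rule range_eqI[of _ _ 0]) simp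
  moreover have "y1 \<in> range (coeff [:y0,y1:])" by (rule range_eqI[of _ _ 1]) simp
  ultimately show ?thesis unfolding all_coeffs_def by auto
qed

lemma norm_scalar_spec:
  fixes x0 x1 x2 y0 y1 :: 'a
  assumes "x2 \<noteq> 0"
  defines "t \<equiv> norm_scalar absv ([:x0,x1,x2:], [:y0,y1:])"
  shows "t \<noteq> 0" "absv (t*x0) \<le> 1" "absv (t*x1) \<le> 1" "absv (t*x2) \<le> 1" "absv (t*y0) \<le> 1" "absv (t*y1) \<le> 1"
    "absv (t*x0) = 1 \<or> absv (t*x1) = 1 \<or> absv (t*x2) = 1 \<or> absv (t*y0) = 1 \<or> absv (t*y1) = 1"
proof -
  let ?S = "{x0,x1,x2,y0,y1}"
  let ?fg = "([:x0,x1,x2:], [:y0,y1:])"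
  define m where "m = Max (absv ` ?S)"
  have "m \<in> absv ` ?S" unfolding m_def by (rule Max_in) auto
  then obtain z where z: "z \<in> ?S" "absv z = m" by auto
  have zmax: "absv y \<le> absv z" if "y \<in> ?S" for y
  proof -
    have "absv y \<le> Max (absv ` ?S)" by (rule Max_ge) (use that in auto)
    then show ?thesis using z(2) unfolding m_def by simp
  qed
  have "absv x2 \<le> absv z" using zmax by simp
  with assms(1) have zpos: "absv z > 0" using avpos[of x2] by simp
  then have z0: "z \<noteq> 0" by auto
  define t0 where "t0 = inverse z"
  have "t0 \<noteq> 0 \<and> (\<forall>x\<in>all_coeffs ?fg. absv (t0 * x) \<le> 1) \<and> (\<exists>x\<in>all_coeffs ?fg. absv (t0 * x) = 1)"
  proof (intro conjI)
    show "t0 \<noteq> 0" using z0 unfolding t0_def by simp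
    show "\<forall>x\<in>all_coeffs ?fg. absv (t0 * x) \<le> 1"
    proof
      fix x assume "x \<in> all_coeffs ?fg"
      then have "x \<in> ?S \<or> x = 0" using all_coeffs_sub by blast
      then have "absv x \<le> absv z"
      proof
        assume "x \<in> ?S" then show ?thesis by (rule zmax)
      next
        assume "x = 0" then show ?thesis using zpos by simp
      qed
      moreover have "absv (t0 * x) = absv x / absv z" unfolding t0_def by (simp add: divide_inverse mult.commute)
      ultimately show "absv (t0 * x) \<le> 1" using zpos by simp
    qed
    have "z \<in> all_coeffs ?fg" using z(1) all_coeffs_in[of x0 x1 x2 y0 y1] by blast
    moreover have "absv (t0 * z) = 1" using z0 unfolding t0_def by simp
    ultimately show "\<exists>x\<in>all_coeffs ?fg. absv (t0 * x) = 1" by blast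
  qed
  then have sp: "t \<noteq> 0 \<and> (\<forall>x\<in>all_coeffs ?fg. absv (t * x) \<le> 1) \<and> (\<exists>x\<in>all_coeffs ?fg. absv (t * x) = 1)"
    unfolding t_def norm_scalar_def by (rule someI)
  then show "t \<noteq> 0" by simp
  have all: "\<forall>x\<in>all_coeffs ?fg. absv (t * x) \<le> 1" using sp by blast
  have ins: "x0 \<in> all_coeffs ?fg" "x1 \<in> all_coeffs ?fg" "x2 \<in> all_coeffs ?fg"
     "y0 \<in> all_coeffs ?fg" "y1 \<in> all_coeffs ?fg" using all_coeffs_in[of x0 x1 x2 y0 y1] by auto
  show "absv (t*x0) \<le> 1" "absv (t*x1) \<le> 1" "absv (t*x2) \<le> 1" "absv (t*y0) \<le> 1" "absv (t*y1) \<le> 1"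
    using bspec[OF all ins(1)] bspec[OF all ins(2)] bspec[OF all ins(3)] bspec[OF all ins(4)] bspec[OF all ins(5)] by simp_all
  from sp obtain x where "x \<in> all_coeffs ?fg" "absv (t*x) = 1" by auto
  with all_coeffs_sub show "absv (t*x0) = 1 \<or> absv (t*x1) = 1 \<or> absv (t*x2) = 1 \<or> absv (t*y0) = 1 \<or> absv (t*y1) = 1"
    by fastforce
qed

end

context P begin
definition "cA0 a = a*(a*(1-l2) + l1 - 1)"
definition "cA1 a c = c*(l1 + a*(2-l2))"
definition "cA2 (c::'a) = c^2"
definition "cB0 a c = c*(1+l2*a)"
definition "cB1 (c::'a) = l2*c^2"
end

locale Pt = P absv red l1 l2 for absv :: "'a::field \<Rightarrow> real" and red :: "'a \<Rightarrow> 'k::field" and l1 l2 +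
  fixes a c t :: 'a
  assumes c0: "c \<noteq> 0" and t0: "t \<noteq> 0"
  and bA0: "absv (t * cA0 a) \<le> 1" and bA1: "absv (t * cA1 a c) \<le> 1" and bA2: "absv (t * cA2 c) \<le> 1"
  and bB0: "absv (t * cB0 a c) \<le> 1" and bB1: "absv (t * cB1 c) \<le> 1"
  and mx: "absv (t * cA0 a) = 1 \<or> absv (t * cA1 a c) = 1 \<or> absv (t * cA2 c) = 1 \<or> absv (t * cB0 a c) = 1 \<or> absv (t * cB1 c) = 1"
begin

definition "f0 = red (t * cA0 a)"
definition "f1 = red (t * cA1 a c)"
definition "f2 = red (t * cA2 c)"
definition "g0 = red (t * cB0 a c)"
definition "g1 = red (t * cB1 c)"

lemma iA0: "inO absv (t * cA0 a)" using bA0 unfolding inO_def .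
lemma iA1: "inO absv (t * cA1 a c)" using bA1 unfolding inO_def .
lemma iA2: "inO absv (t * cA2 c)" using bA2 unfolding inO_def .
lemma iB0: "inO absv (t * cB0 a c)" using bB0 unfolding inO_def .
lemma iB1: "inO absv (t * cB1 c)" using bB1 unfolding inO_def .
lemmas iall = iA0 iA1 iA2 iB0 iB1

lemma nzFG: "[:f0,f1,f2:] \<noteq> 0 \<or> [:g0,g1:] \<noteq> 0"
proof -
  have r: "absv y \<le> 1 \<Longrightarrow> absv y = 1 \<Longrightarrow> red y \<noteq> 0" for y using red_nz_iff by blast
  show ?thesis using mx r[OF bA0] r[OF bA1] r[OF bA2] r[OF bB0] r[OF bB1]
    unfolding f0_def f1_def f2_def g0_def g1_def by auto
qed

lemma Tpos: "absv t > 0" using t0 avpos by blast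
lemma rpos: "absv c > 0" using c0 avpos by blast

lemma f2_nz_iff: "f2 \<noteq> 0 \<longleftrightarrow> absv t * absv c ^ 2 = 1"
  unfolding f2_def cA2_def using red_nz_iff[OF bA2[unfolded cA2_def]] by simp
lemma g1_nz_iff: "g1 \<noteq> 0 \<longleftrightarrow> absv t * absv l2 * absv c ^ 2 = 1"
  unfolding g1_def cB1_def using red_nz_iff[OF bB1[unfolded cB1_def]] by (simp add: mult.assoc)

context
  fixes x :: 'a
  assumes xfix: "x = 0 \<or> x = al3" and xin: "absv (x - a) \<le> absv c"
begin

definition "w = (x - a) / c"
lemma iw: "inO absv w" unfolding inO_def w_def using xin rpos by (simp add: divide_le_eq_1)

lemma E1: "f0 + red w * (f1 + red w * f2) = red w * (g0 + red w * g1)"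
proof -
  have id: "t * cA0 a + w * (t * cA1 a c + w * (t * cA2 c)) = w * (t * cB0 a c + w * (t * cB1 c))"
  proof -
    have z: "x*((1-l2)*x + (l1-1)) = 0"
    proof (cases "x = 0")
      case False
      with xfix have "x = al3" by simp
      moreover have "al3 * (l2 - 1) = l1 - 1" unfolding al3_def using l2m1 by simp
      ultimately have "(1-l2)*x + (l1-1) = 0" by (simp add: algebra_simps)
      then show ?thesis by simp
    qed simp
    have d: "t * cA0 a + w * (t * cA1 a c + w * (t * cA2 c)) - w * (t * cB0 a c + w * (t * cB1 c))
        = t * (x*((1-l2)*x + (l1-1)))"
      unfolding w_def cA0_def cA1_def cA2_def cB0_def cB1_def using c0
      by (simp add: field_simps power2_eq_square)
    have "t * cA0 a + w * (t * cA1 a c + w * (t * cA2 c)) - w * (t * cB0 a c + w * (t * cB1 c)) = 0"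
      by (simp only: d z mult_zero_right)
    then show ?thesis by (simp only: right_minus_eq)
  qed
  have "red (t * cA0 a + w * (t * cA1 a c + w * (t * cA2 c))) = red (w * (t * cB0 a c + w * (t * cB1 c)))"
    using id by simp
  then show ?thesis unfolding f0_def f1_def f2_def g0_def g1_def using iall iw by simp
qed

lemma E2: "g0 + red w * g1 = red (t * c * (1 + l2 * x))"
proof -
  have id: "t * cB0 a c + w * (t * cB1 c) = t * c * (1 + l2 * x)"
    unfolding w_def cB0_def cB1_def using c0 by (simp add: field_simps power2_eq_square)
  have "red (t * cB0 a c + w * (t * cB1 c)) = red (t * c * (1 + l2 * x))" using id by simp
  then show ?thesis unfolding g0_def g1_def using iall iw by simp
qed

lemma E3: "f1 + 2 * f2 * red w - red w * g1 = red (t * c * (l1 + x * (2 - l2)))"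
proof -
  have id: "t * cA1 a c + 2 * (t * cA2 c) * w - w * (t * cB1 c) = t * c * (l1 + x * (2 - l2))"
    unfolding w_def cA1_def cA2_def cB1_def using c0 by (simp add: field_simps power2_eq_square)
  have "red (t * cA1 a c + 2 * (t * cA2 c) * w - w * (t * cB1 c)) = red (t * c * (l1 + x * (2 - l2)))"
    using id by simp
  then show ?thesis unfolding f1_def f2_def g1_def using iall iw by (simp add: red2)
qed

lemma E2o: "inO absv (t * c * (1 + l2 * x))"
proof -
  have id: "t * cB0 a c + w * (t * cB1 c) = t * c * (1 + l2 * x)"
    unfolding w_def cB0_def cB1_def using c0 by (simp add: field_simps power2_eq_square)
  have "inO absv (t * cB0 a c + w * (t * cB1 c))" using iall iw by simp
  then show ?thesis using id by simp
qed

lemma E3o: "inO absv (t * c * (l1 + x * (2 - l2)))"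
proof -
  have id: "t * cA1 a c + 2 * (t * cA2 c) * w - w * (t * cB1 c) = t * c * (l1 + x * (2 - l2))"
    unfolding w_def cA1_def cA2_def cB1_def using c0 by (simp add: field_simps power2_eq_square)
  have "inO absv (t * cA1 a c + 2 * (t * cA2 c) * w - w * (t * cB1 c))" using iall iw by simp
  then show ?thesis using id by simp
qed

lemma hole_val:
  assumes "g0 + red w * g1 = 0" "f1 + 2 * f2 * red w - red w * g1 \<noteq> 0" "f2 \<noteq> 0" "g1 \<noteq> 0"
  shows "absv l2 = 1" "absv (l1 + x * (2 - l2)) = absv c" "absv (1 + l2 * x) < absv c"
proof -
  have T: "absv t * absv c ^ 2 = 1" using assms(3) f2_nz_iff by simp
  have L: "absv t * absv l2 * absv c ^ 2 = 1" using assms(4) g1_nz_iff by simp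
  have B: "absv t * absv c * absv (1 + l2 * x) < 1"
    using assms(1) E2 E2o red_zero_iff unfolding inO_def by (metis avmult)
  have M: "absv t * absv c * absv (l1 + x * (2 - l2)) = 1"
    using assms(2) E3 E3o red_nz_iff unfolding inO_def by (metis avmult)
  have tc: "absv t * absv c > 0" using Tpos rpos by simp
  have T': "absv t * absv c * absv c = 1" using T by (simp add: power2_eq_square mult.assoc)
  have "absv l2 * (absv t * absv c ^ 2) = 1" using L by (simp add: algebra_simps)
  then show "absv l2 = 1" using T by simp
  have "absv t * absv c * absv (l1 + x * (2 - l2)) = absv t * absv c * absv c" using M T' by simp
  then show "absv (l1 + x * (2 - l2)) = absv c" using tc t0 c0 by simp
  have "absv t * absv c * absv (1 + l2 * x) < absv t * absv c * absv c" using B T' by simp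
  then show "absv (1 + l2 * x) < absv c" using mult_less_cancel_left_pos[OF tc] by blast
qed

end

lemma E4: "f2*g0^2 - f1*g0*g1 + f0*g1^2 = red (t^3 * c^4 * (1 - l1*l2))"
proof -
  have id: "(t * cA2 c)*(t * cB0 a c)^2 - (t * cA1 a c)*(t * cB0 a c)*(t * cB1 c) + (t * cA0 a)*(t * cB1 c)^2
     = t^3 * c^4 * (1 - l1*l2)"
    unfolding cA0_def cA1_def cA2_def cB0_def cB1_def by (simp add: algebra_simps power2_eq_square power3_eq_cube power4_eq_xxxx)
  have "red ((t * cA2 c)*(t * cB0 a c)^2 - (t * cA1 a c)*(t * cB0 a c)*(t * cB1 c) + (t * cA0 a)*(t * cB1 c)^2)
     = red (t^3 * c^4 * (1 - l1*l2))" using id by simp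
  then show ?thesis unfolding f0_def f1_def f2_def g0_def g1_def using iall by simp
qed


lemma inf_val: "absv l2 \<le> 1 \<Longrightarrow> f2 = 0 \<Longrightarrow> g1 = 0"
proof -
  assume l: "absv l2 \<le> 1" and f: "f2 = 0"
  have "absv t * absv c ^ 2 \<le> 1" using bA2 unfolding cA2_def by simp
  with f f2_nz_iff have lt: "absv t * absv c ^ 2 < 1" by simp
  have "absv l2 * absv c ^ 2 \<le> 1 * absv c ^ 2" by (rule mult_right_mono) (use l in auto)
  then have "absv t * (absv l2 * absv c ^ 2) \<le> absv t * absv c ^ 2" by (intro mult_left_mono) (use Tpos in auto)
  then have "absv t * absv l2 * absv c ^ 2 \<le> absv t * absv c ^ 2" by (simp add: mult.assoc)
  with lt have "absv t * absv l2 * absv c ^ 2 \<noteq> 1" by simp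
  then show "g1 = 0" using g1_nz_iff by simp
qed

lemma E4o: "inO absv (t^3 * c^4 * (1 - l1*l2))"
proof -
  have id: "(t * cA2 c)*(t * cB0 a c)^2 - (t * cA1 a c)*(t * cB0 a c)*(t * cB1 c) + (t * cA0 a)*(t * cB1 c)^2
     = t^3 * c^4 * (1 - l1*l2)"
    unfolding cA0_def cA1_def cA2_def cB0_def cB1_def by (simp add: algebra_simps power2_eq_square power3_eq_cube power4_eq_xxxx)
  have "inO absv ((t * cA2 c)*(t * cB0 a c)^2 - (t * cA1 a c)*(t * cB0 a c)*(t * cB1 c) + (t * cA0 a)*(t * cB1 c)^2)"
    using iall by simp
  then show ?thesis using id by simp
qed

lemma deg2_val:
  assumes "f2 \<noteq> 0" "f2*g0^2 - f1*g0*g1 + f0*g1^2 \<noteq> 0"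
  shows "absv (1 - l1*l2) = absv c ^ 2" "absv (cA0 a) \<le> absv c ^ 2" "absv (cA1 a c) \<le> absv c ^ 2"
    "absv (cB0 a c) \<le> absv c ^ 2"
proof -
  have T: "absv t * absv c ^ 2 = 1" using assms(1) f2_nz_iff by simp
  have R: "absv t ^ 3 * absv c ^ 4 * absv (1 - l1*l2) = 1"
    using assms(2) E4 E4o red_nz_iff unfolding inO_def by (metis avmult avpow)
  have "absv t ^ 3 * absv c ^ 4 * absv (1 - l1*l2) = absv t ^ 3 * absv c ^ 4 * absv c ^ 2"
  proof -
    have "(absv t * absv c ^ 2) ^ 3 = 1" using T by simp
    moreover have "(absv t * absv c ^ 2) ^ 3 = absv t ^ 3 * absv c ^ 4 * absv c ^ 2"
      by (simp add: power_mult_distrib mult.assoc flip: power_mult power_add)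
    ultimately have "absv t ^ 3 * absv c ^ 4 * absv c ^ 2 = 1" by simp
    then show ?thesis using R by simp
  qed
  then show "absv (1 - l1*l2) = absv c ^ 2" using t0 c0 by simp
  have le: "absv y \<le> absv c ^ 2" if "absv t * absv y \<le> 1" for y
  proof -
    have "absv t * absv y \<le> absv t * absv c ^ 2" using that T by simp
    then show ?thesis using Tpos by simp
  qed
  show "absv (cA0 a) \<le> absv c ^ 2" using le bA0 by simp
  show "absv (cA1 a c) \<le> absv c ^ 2" using le bA1 by simp
  show "absv (cB0 a c) \<le> absv c ^ 2" using le bB0 by simp
qed

lemma bound_val:
  assumes "absv (cA0 a) \<le> K" "absv (cA1 a c) \<le> K" "absv (cA2 c) \<le> K" "absv (cB0 a c) \<le> K" "absv (cB1 c) \<le> K"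
  shows "absv t * K \<ge> 1"
proof -
  have h: "absv (t * y) \<le> absv t * K" if "absv y \<le> K" for y using that Tpos by simp
  show ?thesis using mx h[OF assms(1)] h[OF assms(2)] h[OF assms(3)] h[OF assms(4)] h[OF assms(5)]
    by (elim disjE; linarith)
qed


end

locale PD = Pt absv red l1 l2 a c t for absv :: "'a::field \<Rightarrow> real" and red :: "'a \<Rightarrow> 'k::field" and l1 l2 a c t +
  fixes D :: "'a set"
  assumes repD: "rep absv D = (a, c)" and Ddisc: "D = disc absv a (absv c)"
  and tdef: "t = norm_scalar absv (conj_lift f g a c)"
begin

abbreviation "Fk \<equiv> [:f0,f1,f2:]"
abbreviation "Gk \<equiv> [:g0,g1:]"
abbreviation "cfk \<equiv> cf_deg 2 Fk Gk"
abbreviation "mpk \<equiv> (case red_quot 2 Fk Gk of (Q1, Q2) \<Rightarrow> map_eval (2 - cfk) Q1 Q2)"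

lemma cl_eq: "conj_lift f g a c = ([:cA0 a, cA1 a c, cA2 c:], [:cB0 a c, cB1 c:])"
  unfolding conj_lift_eq cA0_def cA1_def cA2_def cB0_def cB1_def ..

lemma rl: "red_lift_at absv red f g D = (Fk, Gk)"
proof -
  have 1: "map_poly red (smult t [:cA0 a, cA1 a c, cA2 c:]) = Fk"
    by (rule poly_eqI) (simp add: coeff_map_poly f0_def f1_def f2_def coeff_pCons split: nat.splits)
  have 2: "map_poly red (smult t [:cB0 a c, cB1 c:]) = Gk"
    by (rule poly_eqI) (simp add: coeff_map_poly g0_def g1_def coeff_pCons split: nat.splits)
  show ?thesis unfolding red_lift_at_def repD red_pair_def Let_def
    using 1 2 by (simp add: cl_eq tdef[unfolded cl_eq, symmetric])
qed

lemma tII: "D \<in> typeII absv" unfolding typeII_def using Ddisc c0 by blast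

lemma cfk_le: "cfk \<le> 2" by (rule cfle[OF nzFG])

lemma rdeg: "red_deg_at absv red 2 f g D = 2 - cfk"
  unfolding red_deg_at_def rl by simp

lemma fixed_iff: "fixedII absv red 2 f g D \<longleftrightarrow> cfk \<le> 1"
  unfolding fixedII_def rdeg using tII cfk_le by auto

lemma rmap: "red_map_at absv red 2 f g D = mpk"
  unfolding red_map_at_def rl by simp

lemma dirInf: "dir absv red D (Cl Inf) = Inf"
  unfolding dir_def repD by simp

lemma dirFin: "dir absv red D (Cl (Fin x)) = (if absv (x - a) \<le> absv c then Fin (red ((x - a)/c)) else Inf)"
  unfolding dir_def repD by simp

lemma fixcl: "fixcl_pts 2 f g = {Cl (Fin 0), Cl (Fin al3), Cl Inf}"
  unfolding fixcl_pts_def clfix_eq by simp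

abbreviation "d0 \<equiv> dir absv red D (Cl (Fin 0))"
abbreviation "d3 \<equiv> dir absv red D (Cl (Fin al3))"

lemma val: "valence absv red (fixcl_pts 2 f g) D = card {d0, d3, Inf}"
proof -
  have "fixcl_pts 2 f g - {T2 D} = fixcl_pts 2 f g" unfolding fixcl by auto
  then show ?thesis unfolding valence_def by (simp add: fixcl dirInf)
qed

lemma Nm: "N_moved absv red 2 f g D = card {v \<in> {d0, d3, Inf}. mpk v \<noteq> v}"
  unfolding N_moved_def rmap by (simp add: fixcl dirInf)

lemma weight_eq: "weight absv red 2 f g D =
   (if cfk \<le> 1 then int (2 - cfk) - 1 + int (card {v \<in> {d0, d3, Inf}. mpk v \<noteq> v})
    else if card {d0, d3, Inf} \<ge> 3 then int (valence absv red (fixrep_pts absv red 2 f g) D) - 2 else 0)"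
  unfolding weight_def fixed_iff rdeg Nm branch_GammaFix_def val using tII by simp

end


context PD begin

lemma noInf: "cfk \<le> 1 \<Longrightarrow> absv l2 \<le> 1 \<Longrightarrow> mpk Inf \<noteq> Inf \<Longrightarrow> False"
  using L_inf[OF nzFG] inf_val by blast

lemma hole_x:
  assumes fx: "cfk \<le> 1" and xfix: "x = 0 \<or> x = al3" and xin: "absv (x - a) \<le> absv c"
    and mv: "mpk (Fin (red ((x - a)/c))) \<noteq> Fin (red ((x - a)/c))"
  shows "absv l2 = 1" "absv (l1 + x * (2 - l2)) = absv c" "absv (1 + l2 * x) < absv c"
    "g0 + red ((x - a)/c) * g1 = 0" "f2 \<noteq> 0" "g1 \<noteq> 0" "cfk = 1" "mpk Inf = Inf"
    "\<exists>\<beta>. \<forall>y. mpk (Fin y) = Fin (f2/g1*y + \<beta>)"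
proof -
  have wx: "w x = (x - a)/c" using w_def[OF xfix xin] .
  note e1 = E1[OF xfix xin, unfolded wx]
  note H = L_hole[OF nzFG fx e1 mv]
  show "g0 + red ((x - a)/c) * g1 = 0" "f2 \<noteq> 0" "g1 \<noteq> 0" "cfk = 1" "mpk Inf = Inf"
    "\<exists>\<beta>. \<forall>y. mpk (Fin y) = Fin (f2/g1*y + \<beta>)" using H by auto
  note hv = hole_val[OF xfix xin, unfolded wx, OF H(1) H(2) H(3) H(4)]
  show "absv l2 = 1" "absv (l1 + x * (2 - l2)) = absv c" "absv (1 + l2 * x) < absv c" using hv by auto
qed

lemma moved_cases:
  assumes fx: "cfk \<le> 1" and l2le: "absv l2 \<le> 1" and vin: "v \<in> {d0, d3, Inf}" and mv: "mpk v \<noteq> v"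
  shows "(absv a \<le> absv c \<and> v = Fin (red ((0 - a)/c)) \<and> absv l2 = 1 \<and> absv l1 = absv c \<and> 1 < absv c)
       \<or> (absv (al3 - a) \<le> absv c \<and> absv l2 = 1 \<and> absv (l1 + al3*(2-l2)) = absv c \<and> absv (1 + l2*al3) < absv c)"
proof -
  consider "v = d0" | "v = d3" | "v = Inf" using vin by blast
  then show ?thesis
  proof cases
    case 1
    show ?thesis
    proof (cases "absv (0 - a) \<le> absv c")
      case True
      then have v: "v = Fin (red ((0 - a)/c))" using 1 dirFin by simp
      note h = hole_x[of 0, OF fx _ True, folded v, OF _ mv]
      show ?thesis using h True v by simp
    next
      case False
      then have "v = Inf" using 1 dirFin by simp
      then show ?thesis using noInf fx l2le mv by blast
    qed
  next
    case 2
    show ?thesis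
    proof (cases "absv (al3 - a) \<le> absv c")
      case True
      then have v: "v = Fin (red ((al3 - a)/c))" using 2 dirFin by simp
      note h = hole_x[of al3, OF fx _ True, folded v, OF _ mv]
      show ?thesis using h True by (simp add: mult.commute)
    next
      case False
      then have "v = Inf" using 2 dirFin by simp
      then show ?thesis using noInf fx l2le mv by blast
    qed
  next
    case 3
    then show ?thesis using noInf fx l2le mv by blast
  qed
qed

end


context va begin
lemma avadd_max: "absv x \<le> A \<Longrightarrow> absv y \<le> B \<Longrightarrow> absv (x + y) \<le> max A B"
  using avadd[of x y] by (simp add: max_def split: if_splits)
lemma avsub_max: "absv x \<le> A \<Longrightarrow> absv y \<le> B \<Longrightarrow> absv (x - y) \<le> max A B"
  using avsub[of x y] by (simp add: max_def split: if_splits)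
lemma avmult_le: "absv x \<le> A \<Longrightarrow> absv y \<le> B \<Longrightarrow> absv (x * y) \<le> A * B"
  by (simp add: mult_mono')
end

context P begin

lemma absO: "absv l2 \<le> 1 \<Longrightarrow> absv (2 - l2) \<le> 1" using av2 avsub_le by blast
lemma absO': "absv l2 \<le> 1 \<Longrightarrow> absv (1 - l2) \<le> 1" using avsub_le[of 1 1 l2] by simp

lemma bnd_A1: "absv l2 \<le> 1 \<Longrightarrow> absv a \<le> R \<Longrightarrow> absv (cA1 a c) \<le> absv c * max (absv l1) R"
proof -
  assume l: "absv l2 \<le> 1" and aR: "absv a \<le> R"
  have "absv (a * (2 - l2)) \<le> R * 1" by (rule avmult_le[OF aR absO[OF l]])
  then have "absv (l1 + a*(2 - l2)) \<le> max (absv l1) R" using avadd_max[of l1 "absv l1"] by simp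
  then show ?thesis unfolding cA1_def by (simp add: mult_left_mono)
qed

lemma bnd_A0: "absv l2 \<le> 1 \<Longrightarrow> absv a \<le> R \<Longrightarrow> absv (cA0 a) \<le> R * max R (absv (l1 - 1))"
proof -
  assume l: "absv l2 \<le> 1" and aR: "absv a \<le> R"
  have "absv (a * (1 - l2)) \<le> R * 1" by (rule avmult_le[OF aR absO'[OF l]])
  then have "absv (a*(1 - l2) + (l1 - 1)) \<le> max R (absv (l1 - 1))" using avadd_max by simp
  then have "absv a * absv (a*(1 - l2) + (l1 - 1)) \<le> R * max R (absv (l1 - 1))"
    by (intro mult_mono) (use aR order_trans[OF avnn[of a] aR] in auto)
  then show ?thesis by (simp only: cA0_def avmult add_diff_eq)
qed

lemma bnd_B0: "absv l2 \<le> 1 \<Longrightarrow> absv a \<le> R \<Longrightarrow> absv (cB0 a c) \<le> absv c * max 1 R"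
proof -
  assume l: "absv l2 \<le> 1" and aR: "absv a \<le> R"
  have "absv (l2 * a) \<le> 1 * R" by (rule avmult_le[OF l aR])
  then have "absv (1 + l2 * a) \<le> max 1 R" using avadd_max[of 1 1] by simp
  then show ?thesis unfolding cB0_def by (simp add: mult_left_mono)
qed

lemma bnd_B1: "absv l2 \<le> 1 \<Longrightarrow> absv (cB1 c) \<le> absv c ^ 2"
  unfolding cB1_def by (simp add: mult_left_le_one_le)

lemma abs_al3: "absv al3 = absv (l1 - 1) / absv (l2 - 1)" unfolding al3_def by simp

end

context PD begin

lemma card3_dist: "card {d0, d3, Inf} \<ge> 3 \<Longrightarrow> d0 \<noteq> Inf \<and> d3 \<noteq> Inf \<and> d0 \<noteq> d3"
  by (auto simp: card_insert_if split: if_splits)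

lemma branch_pos:
  assumes "card {d0, d3, Inf} \<ge> 3"
  shows "absv a \<le> absv c" "absv (al3 - a) \<le> absv c" "absv al3 = absv c"
    "d0 = Fin (red ((0 - a)/c))" "d3 = Fin (red ((al3 - a)/c))"
proof -
  note dd = card3_dist[OF assms]
  show a1: "absv a \<le> absv c" using dd dirFin[of 0] by (auto split: if_splits)
  show a2: "absv (al3 - a) \<le> absv c" using dd dirFin[of al3] by (auto split: if_splits)
  show d0e: "d0 = Fin (red ((0 - a)/c))" using a1 dirFin[of 0] by simp
  show d3e: "d3 = Fin (red ((al3 - a)/c))" using a2 dirFin[of al3] by simp
  have ne: "red ((0 - a)/c) \<noteq> red ((al3 - a)/c)" using dd d0e d3e by simp
  have o1: "absv ((0 - a)/c) \<le> 1" using a1 rpos by (simp add: divide_le_eq_1)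
  have o2: "absv ((al3 - a)/c) \<le> 1" using a2 rpos by (simp add: divide_le_eq_1)
  have "\<not> absv ((0 - a)/c - (al3 - a)/c) < 1" using ne red_eq_iff[OF o1 o2] by simp
  moreover have "(0 - a)/c - (al3 - a)/c = - (al3 / c)" by (simp add: diff_divide_distrib)
  ultimately have "absv al3 \<ge> absv c" using rpos by (simp add: divide_less_eq_1)
  moreover have "absv al3 \<le> absv c"
  proof -
    have "al3 = (al3 - a) + a" by simp
    then show ?thesis using avadd_le[OF a2 a1] by metis
  qed
  ultimately show "absv al3 = absv c" by simp
qed

lemma B_fixed_A:
  assumes l1: "absv l1 \<le> 1" and l2: "absv l2 \<le> 1" and br: "card {d0, d3, Inf} \<ge> 3"
  shows "cfk \<noteq> 2"
proof -
  note bp = branch_pos[OF br]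
  let ?r = "absv c"
  have l1m: "absv (l1 - 1) \<le> 1" using avsub_le[of l1 1 1] l1 by simp
  have l2m: "absv (l2 - 1) \<le> 1" using avsub_le[of l2 1 1] l2 by simp
  have al3r: "absv (l1 - 1) = ?r * absv (l2 - 1)" using abs_al3 bp(3) l2m1 by (simp add: field_simps)
  have T2le: "absv t * ?r ^ 2 \<le> 1" using bA2 unfolding cA2_def by simp
  have v0: "absv (0 - a) \<le> ?r" using bp(1) by simp
  consider "?r > 1" | "?r = 1" | "?r < 1" by linarith
  then show ?thesis
  proof cases
    case 1
    have b: "absv (cA0 a) \<le> ?r^2" "absv (cA1 a c) \<le> ?r^2" "absv (cA2 c) \<le> ?r^2" "absv (cB0 a c) \<le> ?r^2" "absv (cB1 c) \<le> ?r^2"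
    proof -
      show "absv (cA0 a) \<le> ?r^2" using bnd_A0[OF l2 bp(1)] l1m 1 by (simp add: max_def power2_eq_square)
      show "absv (cA1 a c) \<le> ?r^2" using bnd_A1[where c=c, OF l2 bp(1)] l1 1 by (simp add: max_def power2_eq_square)
      show "absv (cA2 c) \<le> ?r^2" unfolding cA2_def by simp
      show "absv (cB0 a c) \<le> ?r^2" using bnd_B0[where c=c, OF l2 bp(1)] 1 by (simp add: max_def power2_eq_square)
      show "absv (cB1 c) \<le> ?r^2" using bnd_B1[where c=c, OF l2] .
    qed
    have "absv t * ?r^2 = 1" using bound_val[OF b] T2le by simp
    then have f2: "f2 \<noteq> 0" using f2_nz_iff by simp
    have "absv (l2 - 1) < 1"
    proof (rule ccontr)
      assume "\<not> absv (l2 - 1) < 1"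
      then have "?r * absv (l2 - 1) \<ge> ?r * 1" by (intro mult_left_mono) (use rpos in auto)
      with al3r l1m 1 show False by simp
    qed
    then have "absv l2 = 1" using avstrict[of "l2 - 1" 1] by simp
    then have "g1 \<noteq> 0" using g1_nz_iff \<open>absv t * ?r^2 = 1\<close> by simp
    then show ?thesis using L_C1[OF nzFG f2] by simp
  next
    case 2
    have b: "absv (cA0 a) \<le> 1" "absv (cA1 a c) \<le> 1" "absv (cA2 c) \<le> 1" "absv (cB0 a c) \<le> 1" "absv (cB1 c) \<le> 1"
    proof -
      show "absv (cA0 a) \<le> 1" using bnd_A0[OF l2 bp(1)] l1m 2 by (simp add: max_def split: if_splits)
      show "absv (cA1 a c) \<le> 1" using bnd_A1[where c=c, OF l2 bp(1)] l1 2 by (simp add: max_def)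
      show "absv (cA2 c) \<le> 1" unfolding cA2_def using 2 by simp
      show "absv (cB0 a c) \<le> 1" using bnd_B0[where c=c, OF l2 bp(1)] 2 by (simp add: max_def)
      show "absv (cB1 c) \<le> 1" using bnd_B1[where c=c, OF l2] 2 by simp
    qed
    have T1: "absv t = 1" using bound_val[OF b] T2le 2 by simp
    then have f2: "f2 \<noteq> 0" using f2_nz_iff 2 by simp
    have "red (t * c * (1 + l2 * 0)) \<noteq> 0"
      using red_nz_iff E2o[of 0, OF _ v0] T1 2 unfolding inO_def by simp
    then have "g0 + red (w 0) * g1 \<noteq> 0" using E2[of 0, OF _ v0] by simp
    then have "g0 \<noteq> 0 \<or> g1 \<noteq> 0" by auto
    then show ?thesis using L_C1[OF nzFG f2] by simp
  next
    case 3
    have b: "absv (cA0 a) \<le> ?r" "absv (cA1 a c) \<le> ?r" "absv (cA2 c) \<le> ?r" "absv (cB0 a c) \<le> ?r" "absv (cB1 c) \<le> ?r"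
    proof -
      have "max ?r (absv (l1 - 1)) \<le> 1" using 3 l1m by simp
      then have "?r * max ?r (absv (l1 - 1)) \<le> ?r * 1" by (rule mult_left_mono) simp
      then show "absv (cA0 a) \<le> ?r" using bnd_A0[OF l2 bp(1)] by simp
      have "max (absv l1) ?r \<le> 1" using 3 l1 by simp
      then have "?r * max (absv l1) ?r \<le> ?r * 1" by (rule mult_left_mono) simp
      then show "absv (cA1 a c) \<le> ?r" using bnd_A1[where c=c, OF l2 bp(1)] by simp
      have rr: "?r * ?r \<le> ?r" using mult_left_le_one_le[of "?r" "?r"] 3 rpos by simp
      show "absv (cA2 c) \<le> ?r" unfolding cA2_def using rr by (simp add: power2_eq_square)
      show "absv (cB0 a c) \<le> ?r" using bnd_B0[where c=c, OF l2 bp(1)] 3 by (simp add: max_def)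
      show "absv (cB1 c) \<le> ?r" using bnd_B1[where c=c, OF l2] rr by (simp add: power2_eq_square)
    qed
    have Tge: "absv t * ?r \<ge> 1" using bound_val[OF b] .
    have "absv l2 * absv a \<le> 1 * ?r" by (rule mult_mono) (use l2 bp(1) in auto)
    then have "absv (l2 * a) < 1" using 3 by simp
    then have "absv (1 + l2 * a) = 1" using avstrict2[of "l2*a" 1] by simp
    then have "absv (cB0 a c) = ?r" unfolding cB0_def by simp
    then have Tr: "absv t * ?r = 1" using bB0 Tge by simp
    have "?r * absv (l2 - 1) \<le> ?r * 1" by (rule mult_left_mono) (use l2m rpos in auto)
    then have "absv (l1 - 1) < 1" using al3r 3 by simp
    then have l1a: "absv l1 = 1" using avstrict[of "l1 - 1" 1] by simp
    have e2: "red (t * c * (1 + l2 * 0)) \<noteq> 0"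
      using red_nz_iff E2o[of 0, OF _ v0] Tr unfolding inO_def by simp
    have e3: "red (t * c * (l1 + 0 * (2 - l2))) \<noteq> 0"
      using red_nz_iff E3o[of 0, OF _ v0] Tr l1a unfolding inO_def by simp
    show ?thesis
      using L_C2[OF nzFG E1[of 0, OF _ v0]] E2[of 0, OF _ v0] E3[of 0, OF _ v0] e2 e3 by simp
  qed
qed

end


lemma mob_fin: "mob p q 0 1 (Fin z) = Fin (p*z + q)"
  unfolding mob_def map_eval_def form_eval_def by (simp add: algebra_simps)
lemma mob_inf: "mob p q 0 1 Inf = Inf"
  unfolding mob_def map_eval_def form_eval_def by simp

lemma conj_aff:
  fixes m :: "'b::field P1 \<Rightarrow> 'b P1"
  assumes mi: "m Inf = Inf" and mf: "\<And>y. m (Fin y) = Fin (\<alpha>*y + \<beta>)" and a1: "\<alpha> \<noteq> 1"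
  shows "conj_over m (mob \<alpha> 0 0 1)"
  unfolding conj_over_def
proof (intro exI conjI allI)
  define ys where "ys = \<beta> / (1 - \<alpha>)"
  have ys: "\<alpha> * ys + \<beta> = ys" unfolding ys_def using a1 by (simp add: field_simps)
  show "1 * 1 - ys * 0 \<noteq> (0::'b)" by simp
  fix x show "m (mob 1 ys 0 1 x) = mob 1 ys 0 1 (mob \<alpha> 0 0 1 x)"
  proof (cases x)
    case (Fin z)
    have "\<alpha> * (z + ys) + \<beta> = \<alpha> * z + ys" using ys by (simp add: algebra_simps)
    then show ?thesis using Fin by (simp add: mob_fin mf)
  next
    case Inf
    then show ?thesis by (simp add: mob_inf mi)
  qed
qed

lemma conj_trans:
  fixes m :: "'b::field P1 \<Rightarrow> 'b P1"
  assumes mi: "m Inf = Inf" and mf: "\<And>y. m (Fin y) = Fin (y + \<beta>)"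
  shows "conj_over m (mob 1 \<beta> 0 1)"
  unfolding conj_over_def
proof (intro exI conjI allI)
  show "1 * 1 - 0 * 0 \<noteq> (0::'b)" by simp
  fix x show "m (mob 1 0 0 1 x) = mob 1 0 0 1 (mob 1 \<beta> 0 1 x)"
    by (cases x) (simp_all add: mob_fin mob_inf mf mi add.commute)
qed

context P begin

lemma fin_mult_al3: "fin_multiplier f g al3 = (l1 + al3*(2-l2)) / (1 + l2*al3)"
proof -
  have fx: "al3 * al3 + l1 * al3 = al3 * (1 + l2 * al3)"
  proof -
    have "al3 * (l2 - 1) = l1 - 1" unfolding al3_def using l2m1 by simp
    then show ?thesis by (simp add: algebra_simps)
  qed
  have "fin_multiplier f g al3 = ((l1 + 2*al3) * (1 + l2*al3) - (al3*al3 + l1*al3) * l2) / (1 + l2*al3)^2"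
    unfolding fin_multiplier_def phi_f_def phi_g_def by (simp add: pderiv_pCons algebra_simps)
  also have "\<dots> = ((1 + l2*al3) * (l1 + al3*(2-l2))) / (1 + l2*al3)^2"
    unfolding fx by (simp add: algebra_simps)
  also have "\<dots> = (l1 + al3*(2-l2)) / (1 + l2*al3)"
    using gal3nz by (simp add: power2_eq_square)
  finally show ?thesis .
qed

end

context PD begin

lemma B_fixed_B:
  assumes l1: "absv l1 > 1" and l2: "absv l2 = 1" and br: "card {d0, d3, Inf} \<ge> 3"
  shows "cfk \<noteq> 2"
proof -
  note bp = branch_pos[OF br]
  let ?r = "absv c"
  have l2le: "absv l2 \<le> 1" using l2 by simp
  have l2m: "absv (l2 - 1) \<le> 1" using avsub_le[of l2 1 1] l2 by simp
  have l1m: "absv (l1 - 1) = absv l1" using avstrict_sub[of 1 l1] l1 by simp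
  have al3r: "absv (l1 - 1) = ?r * absv (l2 - 1)" using abs_al3 bp(3) l2m1 by (simp add: field_simps)
  have "?r * absv (l2 - 1) \<le> ?r * 1" by (rule mult_left_mono) (use l2m in auto)
  then have l1r: "absv l1 \<le> ?r" using al3r l1m by simp
  have r1: "?r > 1" using l1r l1 by simp
  have b: "absv (cA0 a) \<le> ?r^2" "absv (cA1 a c) \<le> ?r^2" "absv (cA2 c) \<le> ?r^2" "absv (cB0 a c) \<le> ?r^2" "absv (cB1 c) \<le> ?r^2"
  proof -
    show "absv (cA0 a) \<le> ?r^2" using bnd_A0[OF l2le bp(1)] l1m l1r by (simp add: max_def power2_eq_square)
    show "absv (cA1 a c) \<le> ?r^2" using bnd_A1[where c=c, OF l2le bp(1)] l1r by (simp add: max_def power2_eq_square)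
    show "absv (cA2 c) \<le> ?r^2" unfolding cA2_def by simp
    show "absv (cB0 a c) \<le> ?r^2" using bnd_B0[where c=c, OF l2le bp(1)] r1 by (simp add: max_def power2_eq_square)
    show "absv (cB1 c) \<le> ?r^2" using bnd_B1[where c=c, OF l2le] .
  qed
  have T2le: "absv t * ?r ^ 2 \<le> 1" using bA2 unfolding cA2_def by simp
  have "absv t * ?r^2 = 1" using bound_val[OF b] T2le by simp
  then have f2: "f2 \<noteq> 0" and "g1 \<noteq> 0" using f2_nz_iff g1_nz_iff l2 by simp_all
  then show ?thesis using L_C1[OF nzFG f2] by simp
qed

lemma deg2_Ai:
  assumes l1: "absv l1 \<le> 1" and l2: "absv l2 \<le> 1" and c0': "cfk = 0" and rl12: "red (l1*l2) \<noteq> 1"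
  shows "D = disc absv 0 1"
proof -
  note dg = L_deg2[OF nzFG c0']
  note dv = deg2_val[OF conjunct1[OF dg] conjunct2[OF dg]]
  let ?r = "absv c"
  have o12: "absv (l1*l2) \<le> 1" using l1 l2 by (simp add: mult_le_one)
  have "\<not> absv (l1*l2 - 1) < 1" using rl12 red_eq_iff[OF o12, of 1] by simp
  moreover have "absv (l1*l2 - 1) \<le> 1" using avsub_le[OF o12, of 1] by simp
  ultimately have "absv (1 - l1*l2) = 1" using avsym[of "l1*l2" 1] by simp
  then have r2: "?r^2 = 1" using dv(1) by simp
  then have r1: "?r = 1" using rpos by (simp add: power2_eq_1_iff)
  have "absv a \<le> 1"
  proof (rule ccontr)
    assume "\<not> absv a \<le> 1"
    then have a1: "absv a > 1" by simp
    have B: "absv (1 + l2*a) \<le> 1" using dv(4) r1 unfolding cB0_def by simp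
    have "absv (l2 * a) \<le> 1"
    proof (rule ccontr)
      assume "\<not> absv (l2 * a) \<le> 1"
      then have "absv (1 + l2*a) = absv (l2*a)" using avstrict[of 1 "l2*a"] by simp
      with B \<open>\<not> absv (l2 * a) \<le> 1\<close> show False by simp
    qed
    then have "absv l2 * absv a \<le> 1" by simp
    then have "absv l2 < 1"
    proof -
      assume h: "absv l2 * absv a \<le> 1"
      show "absv l2 < 1"
      proof (rule ccontr)
        assume "\<not> absv l2 < 1"
        then have "1 * absv a \<le> absv l2 * absv a" by (intro mult_right_mono) auto
        with h a1 show False by simp
      qed
    qed
    then have "absv (1 - l2) = 1" using avstrict_sub[of l2 1] by simp
    then have h1: "absv (a*(1 - l2)) = absv a" by simp
    moreover have "absv (l1 - 1) \<le> 1" using avsub_le[of l1 1 1] l1 by simp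
    ultimately have "absv (l1 - 1) < absv (a*(1 - l2))" using a1 by linarith
    then have e: "absv (a*(1-l2) + (l1 - 1)) = absv (a*(1 - l2))" by (rule avstrict2)
    have "absv (a*(1-l2) + (l1 - 1)) = absv a" using trans[OF e h1] .
    then have "absv (cA0 a) = absv a * absv a" unfolding cA0_def by (simp add: add_diff_eq)
    with dv(2) r2 have "absv a * absv a \<le> 1" by simp
    moreover have "1 * 1 < absv a * absv a" by (rule mult_strict_mono) (use a1 in auto)
    ultimately show False by simp
  qed
  then show ?thesis using Ddisc r1 disc_eq[of a 0 1] by simp
qed

lemma deg2_Aii:
  assumes l1: "absv l1 \<le> 1" and l2: "absv l2 \<le> 1" and c0': "cfk = 0" and r1: "red l1 = 1" and r2: "red l2 = 1"
  shows "D = disc absv (-1) (sqrt (absv (l1*l2 - 1)))"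
proof -
  note dg = L_deg2[OF nzFG c0']
  note dv = deg2_val[OF conjunct1[OF dg] conjunct2[OF dg]]
  let ?r = "absv c"
  have a1s: "absv (l1 - 1) < 1" using red_eq_iff[OF l1, of 1] r1 by simp
  have bs: "absv (l2 - 1) < 1" using red_eq_iff[OF l2, of 1] r2 by simp
  have l2a: "absv l2 = 1" using avstrict[of "l2 - 1" 1] bs by simp
  have o12: "absv (l1*l2) \<le> 1" using l1 l2 by (simp add: mult_le_one)
  have "red (l1*l2) = 1" using red_mult[OF l1 l2] r1 r2 by simp
  then have "absv (l1*l2 - 1) < 1" using red_eq_iff[OF o12, of 1] by simp
  then have rr: "?r^2 < 1" using dv(1) avsym[of 1 "l1*l2"] by simp
  then have rl1: "?r < 1" using power_less_imp_less_base[of "?r" 2 1] by simp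
  have X1: "absv (1 + l2*a) \<le> ?r" using dv(4) rpos unfolding cB0_def by (simp add: power2_eq_square)
  have X2: "absv (l1 + a*(2 - l2)) \<le> ?r" using dv(3) rpos unfolding cA1_def by (simp add: power2_eq_square)
  have X3': "absv a * absv (a*(1-l2) + (l1 - 1)) \<le> ?r^2" using dv(2) unfolding cA0_def by (simp add: add_diff_eq)
  have aeq: "absv a = 1"
  proof -
    have "\<not> absv a > 1"
    proof
      assume "absv a > 1"
      then have "absv (l2*a) > 1" using l2a by simp
      then have "absv (1 + l2*a) = absv (l2*a)" using avstrict[of 1 "l2*a"] by simp
      with X1 rl1 \<open>absv (l2*a) > 1\<close> show False by simp
    qed
    moreover have "\<not> absv a < 1"
    proof
      assume "absv a < 1"
      then have "absv (l2*a) < 1" using l2a by simp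
      then have "absv (1 + l2*a) = 1" using avstrict2[of "l2*a" 1] by simp
      with X1 rl1 show False by simp
    qed
    ultimately show ?thesis by simp
  qed
  have "?r * ?r \<le> ?r" using mult_left_le_one_le[of "?r" "?r"] rl1 rpos by simp
  then have X3: "absv (a*(1-l2) + (l1 - 1)) \<le> ?r" using X3' aeq by (simp add: power2_eq_square)
  define ab where "ab = a * (l2 - 1)"
  have "ab = (1 + l2*a) - (l1 + a*(2 - l2)) + (a*(1-l2) + (l1 - 1))" unfolding ab_def by (simp add: algebra_simps)
  then have abr: "absv ab \<le> ?r" using avadd_le[OF avsub_le[OF X1 X2] X3] by simp
  have e: "a - (-1) = (1 + l2*a) - ab" unfolding ab_def by (simp add: algebra_simps)
  have "absv ((1 + l2*a) - ab) \<le> ?r" by (rule avsub_le[OF X1 abr])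
  then have "absv (a - (-1)) \<le> ?r" by (simp only: e)
  then have "D = disc absv (-1) ?r" using Ddisc disc_eq by simp
  moreover have "sqrt (absv (l1*l2 - 1)) = ?r" using dv(1) avsym[of 1 "l1*l2"] by simp
  ultimately show ?thesis by simp
qed

lemma deg2_B:
  assumes l1: "absv l1 > 1" and l2: "absv l2 \<le> 1" and c0': "cfk = 0"
  shows False
proof -
  note dg = L_deg2[OF nzFG c0']
  note dv = deg2_val[OF conjunct1[OF dg] conjunct2[OF dg]]
  let ?r = "absv c"
  have "absv (l1*l2) \<le> absv l1" using mult_left_le[of "absv l2" "absv l1"] l2 by simp
  then have "absv (1 - l1*l2) \<le> absv l1" using avsub_le[of 1 "absv l1" "l1*l2"] l1 by simp
  then have rsq: "?r^2 \<le> absv l1" using dv(1) by simp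
  have rl: "?r < absv l1"
  proof (rule ccontr)
    assume "\<not> ?r < absv l1"
    then have "absv l1 * absv l1 \<le> ?r * ?r" by (intro mult_mono) auto
    moreover have "absv l1 * 1 < absv l1 * absv l1" using l1 by simp
    ultimately show False using rsq by (simp add: power2_eq_square)
  qed
  have X2: "absv (l1 + a*(2 - l2)) \<le> ?r" using dv(3) rpos unfolding cA1_def by (simp add: power2_eq_square)
  have X3': "absv a * absv (a*(1-l2) + (l1 - 1)) \<le> ?r^2" using dv(2) unfolding cA0_def by (simp add: add_diff_eq)
  have "absv (a*(2 - l2)) = absv l1"
  proof -
    have "a*(2 - l2) = (l1 + a*(2 - l2)) - l1" by simp
    then show ?thesis using avstrict_sub2[of "l1 + a*(2 - l2)" l1] X2 rl by simp
  qed
  moreover have "absv (a*(2 - l2)) \<le> absv a" using absO[OF l2] mult_left_le[of "absv (2 - l2)" "absv a"] by simp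
  ultimately have al: "absv a \<ge> absv l1" by simp
  have X3: "absv (a*(1-l2) + (l1 - 1)) < ?r"
  proof (rule ccontr)
    assume "\<not> absv (a*(1-l2) + (l1 - 1)) < ?r"
    then have "absv l1 * ?r \<le> absv a * absv (a*(1-l2) + (l1 - 1))" by (intro mult_mono) (use al in auto)
    moreover have "?r * ?r < absv l1 * ?r" using rl rpos by simp
    ultimately show False using X3' by (simp add: power2_eq_square)
  qed
  have e: "a + 1 = (l1 + a*(2 - l2)) - (a*(1-l2) + (l1 - 1))" by (simp add: algebra_simps)
  have "absv ((l1 + a*(2 - l2)) - (a*(1-l2) + (l1 - 1))) \<le> ?r" by (rule avsub_le[OF X2 less_imp_le[OF X3]])
  then have "absv (a + 1) \<le> ?r" by (simp only: e)
  moreover have "absv (a + 1) = absv a" using avstrict[of 1 a] al l1 by (simp add: add.commute)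
  ultimately show False using al rl by simp
qed

end


context PD begin

lemma w1_cases:
  assumes w: "weight absv red 2 f g D = 1"
  shows "cfk = 0 \<or> (cfk = 1 \<and> (\<exists>v\<in>{d0, d3, Inf}. mpk v \<noteq> v)) \<or> (\<not> cfk \<le> 1 \<and> card {d0, d3, Inf} \<ge> 3)"
proof (cases "cfk \<le> 1")
  case True
  show ?thesis
  proof (cases "cfk = 0")
    case False
    with True have c1: "cfk = 1" by simp
    with w True have "int (card {v \<in> {d0, d3, Inf}. mpk v \<noteq> v}) = 1" unfolding weight_eq by simp
    then have "{v \<in> {d0, d3, Inf}. mpk v \<noteq> v} \<noteq> {}" by (metis card.empty of_nat_0 zero_neq_one)
    then show ?thesis using c1 by blast
  qed simp
next
  case False
  then show ?thesis using w unfolding weight_eq by (auto split: if_splits)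
qed

lemma not_fixed_two: "\<not> cfk \<le> 1 \<Longrightarrow> cfk = 2" using cfk_le by simp

lemma g1_f2: "g1 = red l2 * f2" if "absv l2 \<le> 1"
proof -
  have e: "t * cB1 c = l2 * (t * cA2 c)" unfolding cB1_def cA2_def by (simp add: algebra_simps)
  have "red (t * cB1 c) = red (l2 * (t * cA2 c))" by (simp only: e)
  also have "\<dots> = red l2 * red (t * cA2 c)" by (rule red_mult) (use that bA2 in auto)
  finally show ?thesis unfolding g1_def f2_def .
qed

lemma mainA:
  assumes l1: "absv l1 \<le> 1" and l2: "absv l2 \<le> 1" and l3: "absv (fin_multiplier f g al3) \<le> 1"
    and w: "weight absv red 2 f g D = 1"
  shows "W1 absv red 2 f g D \<and> (red (l1*l2) \<noteq> 1 \<longrightarrow> D = disc absv 0 1) \<and>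
    (red l1 = 1 \<and> red l2 = 1 \<and> red (fin_multiplier f g al3) = 1 \<longrightarrow> D = disc absv (-1) (sqrt (absv (l1*l2 - 1))))"
proof -
  show ?thesis using w1_cases[OF w]
  proof (elim disjE conjE)
    assume 1: "cfk = 0"
    have "W1 absv red 2 f g D" unfolding W1_def fixed_iff rdeg using 1 by simp
    then show ?thesis using deg2_Ai[OF l1 l2 1] deg2_Aii[OF l1 l2 1] by blast
  next
    assume 2: "cfk = 1" "\<exists>v\<in>{d0, d3, Inf}. mpk v \<noteq> v"
    then obtain v where v: "v \<in> {d0, d3, Inf}" "mpk v \<noteq> v" by blast
    have fx: "cfk \<le> 1" using 2 by simp
    note mc = moved_cases[OF fx l2 v]
    show ?thesis
    proof (cases "absv l1 = absv c \<and> 1 < absv c")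
      case True
      with l1 show ?thesis by simp
    next
      case False
      with mc have h: "absv (l1 + al3*(2-l2)) = absv c" "absv (1 + l2*al3) < absv c" by auto
      have "absv (fin_multiplier f g al3) = absv (l1 + al3*(2-l2)) / absv (1 + l2*al3)"
        using fin_mult_al3 by simp
      moreover have "absv (1 + l2*al3) > 0" using gal3nz avpos by blast
      ultimately have "absv (fin_multiplier f g al3) > 1" using h by simp
      with l3 show ?thesis by simp
    qed
  next
    assume 3: "\<not> cfk \<le> 1" "card {d0, d3, Inf} \<ge> 3"
    then show ?thesis using B_fixed_A[OF l1 l2 3(2)] not_fixed_two by simp
  qed
qed

lemma mainB:
  assumes l1: "absv l1 > 1" and l2: "absv l2 \<le> 1" and w: "weight absv red 2 f g D = 1"
  shows "D = disc absv 0 (absv l1) \<and> (red l2 \<noteq> 0 \<and> red l2 \<noteq> 1 \<longrightarrow> W2 absv red 2 f g D) \<and>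
     (red l2 = 1 \<longrightarrow> W3 absv red 2 f g D) \<and> (red l2 = 0 \<longrightarrow> W4 absv red 2 f g D)"
proof -
  have l1m: "absv (l1 - 1) = absv l1" using avstrict_sub[of 1 l1] l1 by simp
  show ?thesis using w1_cases[OF w]
  proof (elim disjE conjE)
    assume 1: "cfk = 0"
    then show ?thesis using deg2_B[OF l1 l2] by simp
  next
    assume 2: "cfk = 1" "\<exists>v\<in>{d0, d3, Inf}. mpk v \<noteq> v"
    then obtain v where v: "v \<in> {d0, d3, Inf}" "mpk v \<noteq> v" by blast
    have fx: "cfk \<le> 1" using 2 by simp
    note mc = moved_cases[OF fx l2 v]
    have opt1: "absv a \<le> absv c \<and> v = Fin (red ((0 - a)/c)) \<and> absv l2 = 1 \<and> absv l1 = absv c \<and> 1 < absv c"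
    proof (rule ccontr)
      assume "\<not> ?thesis"
      with mc have h: "absv l2 = 1" "absv (l1 + al3*(2-l2)) = absv c" "absv (1 + l2*al3) < absv c" by auto
      have "absv (l2 - 2) \<le> 1" using avsub_le[of l2 1 2] h(1) av2 by simp
      then have "absv (l1 + l2 - 2) = absv l1" using avstrict2[of "l2 - 2" l1] l1 by (simp add: add_diff_eq)
      moreover have "absv (l1*l2 - 1) = absv l1" using avstrict_sub[of 1 "l1*l2"] l1 h(1) by simp
      ultimately have "absv ((l1 + l2 - 2)/(l2 - 1)) = absv ((l1*l2 - 1)/(l2 - 1))" by simp
      then have "absv (l1 + al3*(2-l2)) = absv (1 + l2*al3)" using mual3 gal3 by simp
      with h show False by simp
    qed
    then have a_r: "absv a \<le> absv c" and vv: "v = Fin (red ((0 - a)/c))" and l2a: "absv l2 = 1"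
      and l1c: "absv l1 = absv c" by auto
    have Deq: "D = disc absv 0 (absv l1)" using Ddisc disc_eq[of a 0 "absv c"] a_r l1c by simp
    have rl2: "red l2 \<noteq> 0" using red_nz_iff[OF l2] l2a by simp
    define v0 where "v0 = red ((0 - a)/c)"
    have mv0: "mpk (Fin v0) \<noteq> Fin v0" using v(2) vv unfolding v0_def by simp
    have a_r': "absv (0 - a) \<le> absv c" using a_r by simp
    note hx = hole_x[of 0, OF fx _ a_r', folded v0_def, OF _ mv0]
    obtain \<beta> where mf: "\<And>y. mpk (Fin y) = Fin (f2/g1*y + \<beta>)" using hx(9) by blast
    have mi: "mpk Inf = Inf" using hx(8) by simp
    have fixD: "fixedII absv red 2 f g D" using fixed_iff fx by simp
    have alpha: "f2/g1 = inverse (red l2)" using g1_f2[OF l2] hx(5) rl2 by (simp add: field_simps)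
    have d0e: "d0 = Fin v0" using dirFin[of 0] a_r unfolding v0_def by simp
    have W2: "W2 absv red 2 f g D" if r: "red l2 \<noteq> 1"
    proof -
      have "inverse (red l2) \<noteq> 1" using r by (metis inverse_1 inverse_inverse_eq)
      then have conj: "conj_over mpk (mob (inverse (red l2)) 0 0 1)"
        using conj_aff[of mpk "inverse (red l2)" \<beta>, OF mi] mf alpha by simp
      have "absv (l2 - 1) = 1"
      proof -
        have "\<not> absv (l2 - 1) < 1" using red_eq_iff[OF l2, of 1] r by simp
        moreover have "absv (l2 - 1) \<le> 1" using avsub_le[of l2 1 1] l2 by simp
        ultimately show ?thesis by simp
      qed
      then have al3c: "absv al3 = absv c" using abs_al3 l1m l1c by simp
      have a3r: "absv (al3 - a) \<le> absv c" using avsub_le[of al3 "absv c" a] al3c a_r by simp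
      define v3 where "v3 = red ((al3 - a)/c)"
      have d3e: "d3 = Fin v3" using dirFin[of al3] a3r unfolding v3_def by simp
      have o1: "absv ((0 - a)/c) \<le> 1" using a_r rpos by (simp add: divide_le_eq_1)
      have o2: "absv ((al3 - a)/c) \<le> 1" using a3r rpos by (simp add: divide_le_eq_1)
      have "(0 - a)/c - (al3 - a)/c = - (al3 / c)" by (simp add: diff_divide_distrib)
      then have "absv ((0 - a)/c - (al3 - a)/c) = 1" using al3c rpos c0 by simp
      then have "v0 \<noteq> v3" using red_eq_iff[OF o1 o2] unfolding v0_def v3_def by simp
      then have "card {d0, d3, Inf} = 3" using d0e d3e by simp
      then have br: "branch_GammaFix absv red 2 f g D" unfolding branch_GammaFix_def val using tII by simp
      have ex: "\<exists>cc. cc \<noteq> 0 \<and> cc \<noteq> 1 \<and> conj_over mpk (mob cc 0 0 1)"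
        by (rule exI[of _ "inverse (red l2)"]) (use conj rl2 \<open>inverse (red l2) \<noteq> 1\<close> in simp)
      show ?thesis unfolding W2_def rmap using fixD br ex by blast
    qed
    have W3: "W3 absv red 2 f g D" if r: "red l2 = 1"
    proof -
      have mf1: "mpk (Fin y) = Fin (y + \<beta>)" for y using mf[of y] alpha r by simp
      have "\<beta> \<noteq> 0" using mv0 mf1[of v0] by auto
      have conj: "conj_over mpk (mob 1 \<beta> 0 1)" using conj_trans[of mpk \<beta>, OF mi mf1] .
      have "card {Fin v0, Inf} \<le> card {Fin v0, d3, Inf}" by (rule card_mono) auto
      then have "card {d0, d3, Inf} \<ge> 2" using d0e by simp
      then have inG: "in_GammaFix absv red 2 f g D" unfolding in_GammaFix_def val using tII by simp
      have ex: "\<exists>aa. aa \<noteq> 0 \<and> conj_over mpk (mob 1 aa 0 1)"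
        by (rule exI[of _ \<beta>]) (use conj \<open>\<beta> \<noteq> 0\<close> in simp)
      show ?thesis unfolding W3_def rmap using fixD inG ex by blast
    qed
    show ?thesis using Deq W2 W3 rl2 by blast
  next
    assume 3: "\<not> cfk \<le> 1" "card {d0, d3, Inf} \<ge> 3"
    have l2lt: "absv l2 < 1"
    proof (rule ccontr)
      assume "\<not> absv l2 < 1"
      then have "absv l2 = 1" using l2 by simp
      then show False using B_fixed_B[OF l1 _ 3(2)] not_fixed_two 3(1) by simp
    qed
    then have rl2: "red l2 = 0" using red_zero_iff[OF l2] by simp
    note bp = branch_pos[OF 3(2)]
    have "absv (l2 - 1) = 1" using avstrict_sub2[of l2 1] l2lt by simp
    then have "absv al3 = absv l1" using abs_al3 l1m by simp
    then have Deq: "D = disc absv 0 (absv l1)" using Ddisc disc_eq[of a 0 "absv c"] bp(1) bp(3) by simp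
    have W4: "W4 absv red 2 f g D"
      unfolding W4_def branch_GammaFix_def val fixed_iff using tII 3 by simp
    show ?thesis using Deq W4 rl2 by simp
  qed
qed

end


context P begin

lemma rep_spec: assumes "D \<in> typeII absv"
  shows "snd (rep absv D) \<noteq> 0" "D = disc absv (fst (rep absv D)) (absv (snd (rep absv D)))"
proof -
  from assms obtain a c where "c \<noteq> 0" "D = disc absv a (absv c)" unfolding typeII_def by blast
  then have ex: "\<exists>ac. snd ac \<noteq> 0 \<and> D = disc absv (fst ac) (absv (snd ac))" by (intro exI[of _ "(a, c)"]) simp
  have "snd (rep absv D) \<noteq> 0 \<and> D = disc absv (fst (rep absv D)) (absv (snd (rep absv D)))"
    unfolding rep_def using someI_ex[OF ex] .
  then show "snd (rep absv D) \<noteq> 0" "D = disc absv (fst (rep absv D)) (absv (snd (rep absv D)))" by auto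
qed

lemma PD_ex:
  assumes "D \<in> typeII absv"
  shows "PD absv red l1 l2 (fst (rep absv D)) (snd (rep absv D))
     (norm_scalar absv (conj_lift f g (fst (rep absv D)) (snd (rep absv D)))) D"
proof -
  define a where "a = fst (rep absv D)"
  define c where "c = snd (rep absv D)"
  have c0: "c \<noteq> 0" and Dd: "D = disc absv a (absv c)" using rep_spec[OF assms] unfolding a_def c_def by auto
  have rp: "rep absv D = (a, c)" unfolding a_def c_def by simp
  have cl: "conj_lift f g a c = ([:cA0 a, cA1 a c, cA2 c:], [:cB0 a c, cB1 c:])"
    unfolding conj_lift_eq cA0_def cA1_def cA2_def cB0_def cB1_def ..
  have x2: "cA2 c \<noteq> 0" unfolding cA2_def using c0 by simp
  note ns = norm_scalar_spec[OF x2, of "cA0 a" "cA1 a c" "cB0 a c" "cB1 c"]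
  show ?thesis unfolding a_def[symmetric] c_def[symmetric]
    unfolding PD_def PD_axioms_def Pt_def Pt_axioms_def
    using ns c0 Dd rp cl P_axioms by (simp add: P_def)
qed

lemma weight_typeII: "weight absv red 2 f g D \<noteq> 0 \<Longrightarrow> D \<in> typeII absv"
  unfolding weight_def fixedII_def branch_GammaFix_def by (auto split: if_splits)

end

theorem proposition3p4:
  fixes absv :: "'a::field \<Rightarrow> real" and red :: "'a \<Rightarrow> 'k::field" and l1 l2 :: 'a
  assumes "nonarch_abs absv"
    and "complete_wrt absv"
    and "alg_closed TYPE('a)"
    and "residue_map absv red"
    and "l1 * l2 \<noteq> 1"
    and "l2 \<noteq> 1"
    and "(l1 - 1) / (l2 - 1) \<noteq> 0"
  shows
   "let f = phi_f l1; g = phi_g l2;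
        l3 = fin_multiplier f g ((l1 - 1) / (l2 - 1));
        w = weight absv red 2 f g
    in
     (absv l1 \<le> 1 \<and> absv l2 \<le> 1 \<and> absv l3 \<le> 1 \<longrightarrow>
        (\<forall>\<xi>. w \<xi> = 1 \<longrightarrow>
           W1 absv red 2 f g \<xi> \<and>
           (red (l1 * l2) \<noteq> 1 \<longrightarrow> \<xi> = disc absv 0 1) \<and>
           (red l1 = 1 \<and> red l2 = 1 \<and> red l3 = 1 \<longrightarrow>
              \<xi> = disc absv (-1) (sqrt (absv (l1 * l2 - 1))))))
   \<and> (absv l1 > 1 \<and> absv l2 \<le> 1 \<longrightarrow>
        (\<forall>\<xi>. w \<xi> = 1 \<longrightarrow>
           \<xi> = disc absv 0 (absv l1) \<and>
           (red l2 \<noteq> 0 \<and> red l2 \<noteq> 1 \<longrightarrow> W2 absv red 2 f g \<xi>) \<and>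
           (red l2 = 1 \<longrightarrow> W3 absv red 2 f g \<xi>) \<and>
           (red l2 = 0 \<longrightarrow> W4 absv red 2 f g \<xi>)))"
proof -
  interpret P absv red l1 l2
    by (unfold_locales) (use assms in auto)
  have A: "\<xi> \<in> typeII absv \<Longrightarrow> PD absv red l1 l2 (fst (rep absv \<xi>)) (snd (rep absv \<xi>))
     (norm_scalar absv (conj_lift f g (fst (rep absv \<xi>)) (snd (rep absv \<xi>)))) \<xi>" for \<xi>
    by (rule PD_ex)
  show ?thesis unfolding Let_def al3_def[symmetric]
  proof (rule conjI, goal_cases)
    case 1
    show ?case
    proof (intro impI allI)
      fix \<xi> assume h: "absv l1 \<le> 1 \<and> absv l2 \<le> 1 \<and> absv (fin_multiplier f g al3) \<le> 1"
        and w: "weight absv red 2 f g \<xi> = 1"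
      have "\<xi> \<in> typeII absv" using w weight_typeII by simp
      then show "W1 absv red 2 f g \<xi> \<and>
           (red (l1 * l2) \<noteq> 1 \<longrightarrow> \<xi> = disc absv 0 1) \<and>
           (red l1 = 1 \<and> red l2 = 1 \<and> red (fin_multiplier f g al3) = 1 \<longrightarrow>
              \<xi> = disc absv (-1) (sqrt (absv (l1 * l2 - 1))))"
        using PD.mainA[OF A] h w by blast
    qed
  next
    case 2
    show ?case
    proof (intro impI allI)
      fix \<xi> assume h: "absv l1 > 1 \<and> absv l2 \<le> 1" and w: "weight absv red 2 f g \<xi> = 1"
      have "\<xi> \<in> typeII absv" using w weight_typeII by simp
      then show "\<xi> = disc absv 0 (absv l1) \<and>
           (red l2 \<noteq> 0 \<and> red l2 \<noteq> 1 \<longrightarrow> W2 absv red 2 f g \<xi>) \<and>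
           (red l2 = 1 \<longrightarrow> W3 absv red 2 f g \<xi>) \<and>
           (red l2 = 0 \<longrightarrow> W4 absv red 2 f g \<xi>)"
        using PD.mainB[OF A] h w by blast
    qed
  qed
qed


end
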